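(* Let $G$ be a second countable locally compact Hausdorff groupoid with a fixed left Haar system $\lambda=\{\lambda^u\}_{u\in G^0}$, and let $(\Phi,\Psi)$ be a complementary pair of $N$-functions with $\Phi\in\Delta_2$. Given $u\in G^0$ and $g\in L^\Phi(G^u)$ with $\|g\|^0_\Phi\le k$, there exists $\eta\in E_0^\Phi$ such that $\eta^u=g$ and $\|\eta\|^0_\Phi\le k$.
   Context: $G^0$ is the unit space, $r(x)=xx^{-1}$, $d(x)=x^{-1}x$, $G^u=r^{-1}(u)$; the left Haar system consists of positive Radon measures $\lambda^u$ with support $G^u$, $u\mapsto\int f d\lambda^u$ continuous for $f\in C_c(G)$, and $\int f(xy)d\lambda^{d(x)}(y)=\int f(y)d\lambda^{r(x)}(y)$. An $N$-function is a continuous even convex $\Phi:\mathbb R\to[0,\infty)$ with $\Phi(x)=0$ iff $x=0$, $\Phi(x)/x\to0$ as $x\to0$, $\to\infty$ as $x\to\infty$; complementary function $\Psi(y)=\sup_{x\ge0}(x|y|-\Phi(x))$. $\Phi\in\Delta_2$: there is $k>0$ with $\Phi(2x)\le k\Phi(x)$ for all $x\ge0$ ($G$ non-compact), resp. for $x\ge x_0$, some $x_0>0$ ($G$ compact). $L^\Phi(G^u)$: measurable $f$ on $G^u$ with $\int\Phi(\alpha|f|)d\lambda^u<\infty$ for some $\alpha>0$, gauge norm $\|f\|^0_\Phi=\inf\{k>0:\int\Phi(|f|/k)d\lambda^u\le1\}$. For $f\in C_c(G)$, $f^u=f|_{G^u}$. $E_0^\Phi$ is the Banach space of sections $\xi=(\xi^u)$,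 $\xi^u\in L^\Phi(G^u)$, which are locally close to $C_c(G)$ (for each $u_0$, $\varepsilon>0$ there are $f\in C_c(G)$ and a neighbourhood $V$ of $u_0$ with $\|\xi^v-f^v\|^0_\Phi<\varepsilon$ on $V$) and with $u\mapsto\|\xi^u\|^0_\Phi$ vanishing at infinity, normed by $\|\xi\|^0_\Phi=\sup_u\|\xi^u\|^0_\Phi$. *)

theory Defs
  imports "HOL-Analysis.Analysis"
begin

text \<open>A groupoid on the whole carrier type 'g: G2 is the set of composable pairs,
  gm the (partial) multiplication, gi the inversion.\<close>

definition groupoid :: "('g \<times> 'g) set \<Rightarrow> ('g \<Rightarrow> 'g \<Rightarrow> 'g) \<Rightarrow> ('g \<Rightarrow> 'g) \<Rightarrow> bool" where
  "groupoid G2 gm gi \<longleftrightarrow>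
     (\<forall>x y z. (x, y) \<in> G2 \<and> (y, z) \<in> G2 \<longrightarrow>
        (gm x y, z) \<in> G2 \<and> (x, gm y z) \<in> G2 \<and> gm (gm x y) z = gm x (gm y z)) \<and>
     (\<forall>x. gi (gi x) = x) \<and>
     (\<forall>x. (x, gi x) \<in> G2) \<and>
     (\<forall>x y. (x, y) \<in> G2 \<longrightarrow> gm (gi x) (gm x y) = y) \<and>
     (\<forall>x y. (x, y) \<in> G2 \<longrightarrow> gm (gm x y) (gi y) = x)"

definition topological_groupoid ::
  "('g::topological_space \<times> 'g) set \<Rightarrow> ('g \<Rightarrow> 'g \<Rightarrow> 'g) \<Rightarrow> ('g \<Rightarrow> 'g) \<Rightarrow> bool" where
  "topological_groupoid G2 gm gi \<longleftrightarrow>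
     groupoid G2 gm gi \<and>
     continuous_on G2 (\<lambda>p. gm (fst p) (snd p)) \<and>
     continuous_on UNIV gi"

definition range_map :: "('g \<Rightarrow> 'g \<Rightarrow> 'g) \<Rightarrow> ('g \<Rightarrow> 'g) \<Rightarrow> 'g \<Rightarrow> 'g" where
  "range_map gm gi x = gm x (gi x)"

definition source_map :: "('g \<Rightarrow> 'g \<Rightarrow> 'g) \<Rightarrow> ('g \<Rightarrow> 'g) \<Rightarrow> 'g \<Rightarrow> 'g" where
  "source_map gm gi x = gm (gi x) x"

definition unit_space :: "('g \<Rightarrow> 'g \<Rightarrow> 'g) \<Rightarrow> ('g \<Rightarrow> 'g) \<Rightarrow> 'g set" where
  "unit_space gm gi = range (range_map gm gi)"

definition range_fibre :: "('g \<Rightarrow> 'g \<Rightarrow> 'g) \<Rightarrow> ('g \<Rightarrow> 'g) \<Rightarrow> 'g \<Rightarrow> 'g set" where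
  "range_fibre gm gi u = {x. range_map gm gi x = u}"

definition measure_support :: "'a::topological_space measure \<Rightarrow> 'a set" where
  "measure_support M = {x. \<forall>U. open U \<and> x \<in> U \<longrightarrow> emeasure M U > 0}"

text \<open>Positive Radon measure on a second countable locally compact Hausdorff space:
  a Borel measure that is finite on compact sets (in this setting such measures are
  automatically regular).\<close>
definition radon_measure :: "'a::topological_space measure \<Rightarrow> bool" where
  "radon_measure M \<longleftrightarrow> sets M = sets borel \<and> (\<forall>K. compact K \<longrightarrow> emeasure M K < \<infinity>)"

definition Cc :: "('a::topological_space \<Rightarrow> real) set" where
  "Cc = {f. continuous_on UNIV f \<and> compact (closure {x. f x \<noteq> 0})}"

definition left_haar_system ::
  "('g::topological_space \<times> 'g) set \<Rightarrow> ('g \<Rightarrow> 'g \<Rightarrow> 'g) \<Rightarrow> ('g \<Rightarrow> 'g) \<Rightarrow> ('g \<Rightarrow> 'g measure) \<Rightarrow> bool" where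
  "left_haar_system G2 gm gi lam \<longleftrightarrow>
     (\<forall>u \<in> unit_space gm gi.
        radon_measure (lam u) \<and> measure_support (lam u) = range_fibre gm gi u) \<and>
     (\<forall>f \<in> Cc. continuous_on (unit_space gm gi) (\<lambda>u. integral\<^sup>L (lam u) f)) \<and>
     (\<forall>f \<in> Cc. \<forall>x.
        (\<integral>y. f (gm x y) \<partial>(lam (source_map gm gi x)))
          = (\<integral>y. f y \<partial>(lam (range_map gm gi x))))"

definition N_function :: "(real \<Rightarrow> real) \<Rightarrow> bool" where
  "N_function \<Phi> \<longleftrightarrow>
     continuous_on UNIV \<Phi> \<and> (\<forall>x. \<Phi> (- x) = \<Phi> x) \<and> convex_on UNIV \<Phi> \<and>
     (\<forall>x. \<Phi> x \<ge> 0) \<and> (\<forall>x. \<Phi> x = 0 \<longleftrightarrow> x = 0) \<and>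
     ((\<lambda>x. \<Phi> x / x) \<longlongrightarrow> 0) (at 0) \<and>
     filterlim (\<lambda>x. \<Phi> x / x) at_top at_top"

definition complementary_function :: "(real \<Rightarrow> real) \<Rightarrow> real \<Rightarrow> real" where
  "complementary_function \<Phi> y = (SUP x \<in> {0..}. x * \<bar>y\<bar> - \<Phi> x)"

definition Delta2 :: "bool \<Rightarrow> (real \<Rightarrow> real) \<Rightarrow> bool" where
  "Delta2 space_compact \<Phi> \<longleftrightarrow>
     (if space_compact
      then (\<exists>k>0. \<exists>x0>0. \<forall>x\<ge>x0. \<Phi> (2 * x) \<le> k * \<Phi> x)
      else (\<exists>k>0. \<forall>x\<ge>0. \<Phi> (2 * x) \<le> k * \<Phi> x))"

definition orlicz_space :: "'a measure \<Rightarrow> (real \<Rightarrow> real) \<Rightarrow> ('a \<Rightarrow> real) set" where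
  "orlicz_space M \<Phi> = {f. f \<in> borel_measurable M \<and>
      (\<exists>\<alpha>>0. (\<integral>\<^sup>+ x. ennreal (\<Phi> (\<alpha> * \<bar>f x\<bar>)) \<partial>M) < \<infinity>)}"

definition gauge_norm :: "'a measure \<Rightarrow> (real \<Rightarrow> real) \<Rightarrow> ('a \<Rightarrow> real) \<Rightarrow> real" where
  "gauge_norm M \<Phi> f = Inf {k. k > 0 \<and> (\<integral>\<^sup>+ x. ennreal (\<Phi> (\<bar>f x\<bar> / k)) \<partial>M) \<le> 1}"

definition E0 ::
  "('g \<Rightarrow> 'g \<Rightarrow> 'g) \<Rightarrow> ('g::topological_space \<Rightarrow> 'g) \<Rightarrow> ('g \<Rightarrow> 'g measure) \<Rightarrow> (real \<Rightarrow> real)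
     \<Rightarrow> ('g \<Rightarrow> ('g \<Rightarrow> real)) set" where
  "E0 gm gi lam \<Phi> = {\<xi>.
     (\<forall>u \<in> unit_space gm gi. \<xi> u \<in> orlicz_space (lam u) \<Phi>) \<and>
     (\<forall>u0 \<in> unit_space gm gi. \<forall>\<epsilon>>0. \<exists>f \<in> Cc. \<exists>V. open V \<and> u0 \<in> V \<and>
        (\<forall>v \<in> V \<inter> unit_space gm gi. gauge_norm (lam v) \<Phi> (\<lambda>x. \<xi> v x - f x) < \<epsilon>)) \<and>
     (\<forall>\<epsilon>>0. \<exists>K. compact K \<and> K \<subseteq> unit_space gm gi \<and>
        (\<forall>u \<in> unit_space gm gi - K. gauge_norm (lam u) \<Phi> (\<xi> u) < \<epsilon>))}"

definition E0_norm ::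
  "('g \<Rightarrow> 'g \<Rightarrow> 'g) \<Rightarrow> ('g \<Rightarrow> 'g) \<Rightarrow> ('g \<Rightarrow> 'g measure) \<Rightarrow> (real \<Rightarrow> real)
     \<Rightarrow> ('g \<Rightarrow> ('g \<Rightarrow> real)) \<Rightarrow> real" where
  "E0_norm gm gi lam \<Phi> \<xi> = (SUP u \<in> unit_space gm gi. gauge_norm (lam u) \<Phi> (\<xi> u))"

end

theory Submission
  imports Defs
begin


section \<open>N-function facts\<close>

lemma nf_0: "N_function \<Phi> \<Longrightarrow> \<Phi> 0 = 0" by (simp add: N_function_def)
lemma nf_nonneg: "N_function \<Phi> \<Longrightarrow> \<Phi> x \<ge> 0" by (simp add: N_function_def)
lemma nf_pos: "N_function \<Phi> \<Longrightarrow> x \<noteq> 0 \<Longrightarrow> \<Phi> x > 0"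
  unfolding N_function_def by (metis order_le_less)
lemma nf_even: "N_function \<Phi> \<Longrightarrow> \<Phi> (- x) = \<Phi> x" by (simp add: N_function_def)
lemma nf_abs: "N_function \<Phi> \<Longrightarrow> \<Phi> \<bar>x\<bar> = \<Phi> x"
  by (cases "x \<ge> 0") (auto simp: nf_even)
lemma nf_cont: "N_function \<Phi> \<Longrightarrow> continuous_on UNIV \<Phi>" by (simp add: N_function_def)
lemma nf_meas: "N_function \<Phi> \<Longrightarrow> \<Phi> \<in> borel_measurable borel"
  by (simp add: borel_measurable_continuous_onI nf_cont)

lemma nf_convex:
  assumes "N_function \<Phi>" "0 \<le> a" "0 \<le> b" "a + b = 1"
  shows "\<Phi> (a*x + b*y) \<le> a * \<Phi> x + b * \<Phi> y"
proof -
  have "convex_on UNIV \<Phi>" using assms(1) by (simp add: N_function_def)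
  then show ?thesis using assms
    by (metis convex_onD diff_eq_eq iso_tuple_UNIV_I real_scaleR_def add.commute le_add_same_cancel2)
qed

lemma nf_scale:
  assumes "N_function \<Phi>" "0 \<le> t" "t \<le> 1"
  shows "\<Phi> (t*x) \<le> t * \<Phi> x"
  using nf_convex[OF assms(1) assms(2), of "1 - t" x 0] assms by (simp add: nf_0)

lemma nf_mono:
  assumes "N_function \<Phi>" "0 \<le> x" "x \<le> y"
  shows "\<Phi> x \<le> \<Phi> y"
proof (cases "y = 0")
  case True then show ?thesis using assms by simp
next
  case False
  then have y: "y > 0" using assms by simp
  have "\<Phi> x = \<Phi> ((x/y) * y)" using y by simp
  also have "\<dots> \<le> (x/y) * \<Phi> y" using nf_scale[OF assms(1), of "x/y" y] assms y by simp
  also have "\<dots> \<le> 1 * \<Phi> y" using assms y nf_nonneg[OF assms(1), of y]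
    by (intro mult_right_mono) auto
  finally show ?thesis by simp
qed

section \<open>Modular and gauge norm\<close>

definition modu :: "'a measure \<Rightarrow> (real \<Rightarrow> real) \<Rightarrow> ('a \<Rightarrow> real) \<Rightarrow> real \<Rightarrow> ennreal" where
  "modu M \<Phi> h c = (\<integral>\<^sup>+ x. ennreal (\<Phi> (\<bar>h x\<bar> / c)) \<partial>M)"

definition adm :: "'a measure \<Rightarrow> (real \<Rightarrow> real) \<Rightarrow> ('a \<Rightarrow> real) \<Rightarrow> bool" where
  "adm M \<Phi> h \<longleftrightarrow> h \<in> borel_measurable M \<and> (\<exists>c>0. modu M \<Phi> h c \<le> 1)"

lemma gauge_norm_modu: "gauge_norm M \<Phi> h = Inf {c. c > 0 \<and> modu M \<Phi> h c \<le> 1}"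
  unfolding gauge_norm_def modu_def ..

lemma modu_meas[measurable]:
  assumes "N_function \<Phi>" "h \<in> borel_measurable M"
  shows "(\<lambda>x. ennreal (\<Phi> (\<bar>h x\<bar> / c))) \<in> borel_measurable M"
  using nf_meas[OF assms(1)] assms(2) by measurable

lemma modu_mono_c:
  assumes "N_function \<Phi>" "0 < c" "c \<le> d"
  shows "modu M \<Phi> h d \<le> modu M \<Phi> h c"
  unfolding modu_def
proof (rule nn_integral_mono)
  fix x
  have "\<bar>h x\<bar> / d \<le> \<bar>h x\<bar> / c" using assms by (simp add: frac_le)
  then show "ennreal (\<Phi> (\<bar>h x\<bar> / d)) \<le> ennreal (\<Phi> (\<bar>h x\<bar> / c))"
    using nf_mono[OF assms(1)] assms by (simp add: ennreal_leI)
qed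

lemma modu_scale_c:
  assumes "N_function \<Phi>" "0 < c" "c \<le> d" "h \<in> borel_measurable M"
  shows "modu M \<Phi> h d \<le> ennreal (c/d) * modu M \<Phi> h c"
proof -
  have "modu M \<Phi> h d \<le> (\<integral>\<^sup>+ x. ennreal (c/d) * ennreal (\<Phi> (\<bar>h x\<bar> / c)) \<partial>M)"
    unfolding modu_def
  proof (rule nn_integral_mono)
    fix x
    have "\<Phi> (\<bar>h x\<bar> / d) = \<Phi> ((c/d) * (\<bar>h x\<bar> / c))" using assms by simp
    also have "\<dots> \<le> (c/d) * \<Phi> (\<bar>h x\<bar> / c)"
      by (rule nf_scale[OF assms(1)]) (use assms in auto)
    finally have "\<Phi> (\<bar>h x\<bar> / d) \<le> (c/d) * \<Phi> (\<bar>h x\<bar> / c)" .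
    then show "ennreal (\<Phi> (\<bar>h x\<bar> / d)) \<le> ennreal (c/d) * ennreal (\<Phi> (\<bar>h x\<bar> / c))"
      using assms nf_nonneg[OF assms(1)] by (subst ennreal_mult[symmetric]) (auto intro: ennreal_leI)
  qed
  also have "\<dots> = ennreal (c/d) * modu M \<Phi> h c"
    unfolding modu_def using assms by (simp add: nn_integral_cmult)
  finally show ?thesis .
qed

lemma gauge_set_bdd: "bdd_below {c. c > 0 \<and> modu M \<Phi> h c \<le> 1}"
  by (rule bdd_belowI[of _ 0]) auto

lemma gauge_nonneg: "adm M \<Phi> h \<Longrightarrow> 0 \<le> gauge_norm M \<Phi> h"
  unfolding gauge_norm_modu adm_def by (rule cInf_greatest) auto

lemma gauge_le: "0 < c \<Longrightarrow> modu M \<Phi> h c \<le> 1 \<Longrightarrow> gauge_norm M \<Phi> h \<le> c"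
  unfolding gauge_norm_modu by (rule cInf_lower[OF _ gauge_set_bdd]) auto

lemma gauge_lt:
  assumes "adm M \<Phi> h" "gauge_norm M \<Phi> h < d"
  shows "\<exists>c. 0 < c \<and> c < d \<and> modu M \<Phi> h c \<le> 1"
proof -
  have ne: "{c. c > 0 \<and> modu M \<Phi> h c \<le> 1} \<noteq> {}" using assms(1) by (auto simp: adm_def)
  from cInf_lessD[OF ne] assms(2) show ?thesis unfolding gauge_norm_modu by auto
qed

lemma modu_cong_AE: "(AE x in M. h1 x = h2 x) \<Longrightarrow> modu M \<Phi> h1 c = modu M \<Phi> h2 c"
  unfolding modu_def by (rule nn_integral_cong_AE) (erule eventually_mono, simp)

lemma gauge_cong_AE: "(AE x in M. h1 x = h2 x) \<Longrightarrow> gauge_norm M \<Phi> h1 = gauge_norm M \<Phi> h2"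
  unfolding gauge_norm_modu using modu_cong_AE[of h1 h2 M \<Phi>] by simp

lemma modu_zero: "N_function \<Phi> \<Longrightarrow> modu M \<Phi> (\<lambda>x. 0) c = 0"
  unfolding modu_def by (simp add: nf_0)

lemma gauge_zero: "N_function \<Phi> \<Longrightarrow> gauge_norm M \<Phi> (\<lambda>x. 0) = 0"
proof -
  assume nf: "N_function \<Phi>"
  have "{c. c > 0 \<and> modu M \<Phi> (\<lambda>x. 0) c \<le> 1} = {0<..}" by (auto simp: modu_zero[OF nf])
  then show ?thesis unfolding gauge_norm_modu by simp
qed

lemma adm_zero: "N_function \<Phi> \<Longrightarrow> adm M \<Phi> (\<lambda>x. 0)"
  unfolding adm_def by (auto simp: modu_zero intro: exI[of _ 1])

lemma modu_neg: "modu M \<Phi> (\<lambda>x. - h x) c = modu M \<Phi> h c"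
  unfolding modu_def by simp

lemma gauge_neg: "gauge_norm M \<Phi> (\<lambda>x. - h x) = gauge_norm M \<Phi> h"
  unfolding gauge_norm_modu modu_neg ..

lemma adm_neg: "adm M \<Phi> h \<Longrightarrow> adm M \<Phi> (\<lambda>x. - h x)"
  unfolding adm_def modu_neg by auto

lemma modu_add_le:
  assumes nf: "N_function \<Phi>" and [measurable]: "h1 \<in> borel_measurable M" "h2 \<in> borel_measurable M"
    and a: "0 < a" and b: "0 < b"
  shows "modu M \<Phi> (\<lambda>x. h1 x + h2 x) (a + b) \<le>
           ennreal (a/(a+b)) * modu M \<Phi> h1 a + ennreal (b/(a+b)) * modu M \<Phi> h2 b"
proof -
  have [measurable]: "\<Phi> \<in> borel_measurable borel" using nf_meas[OF nf] .
  have ab1: "a/(a+b) + b/(a+b) = 1" using a b by (simp add: add_divide_distrib[symmetric])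
  have "modu M \<Phi> (\<lambda>x. h1 x + h2 x) (a + b) \<le>
     (\<integral>\<^sup>+ x. ennreal (a/(a+b)) * ennreal (\<Phi> (\<bar>h1 x\<bar> / a)) + ennreal (b/(a+b)) * ennreal (\<Phi> (\<bar>h2 x\<bar> / b)) \<partial>M)"
    unfolding modu_def
  proof (rule nn_integral_mono)
    fix x
    have eq: "(a/(a+b)) * (\<bar>h1 x\<bar> / a) + (b/(a+b)) * (\<bar>h2 x\<bar> / b) = (\<bar>h1 x\<bar> + \<bar>h2 x\<bar>) / (a+b)"
    proof -
      have e1: "(a/(a+b)) * (\<bar>h1 x\<bar> / a) = \<bar>h1 x\<bar>/(a+b)" using a b by simp
      have e2: "(b/(a+b)) * (\<bar>h2 x\<bar> / b) = \<bar>h2 x\<bar>/(a+b)" using a b by simp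
      show ?thesis unfolding e1 e2 by (simp add: add_divide_distrib)
    qed
    have "\<bar>h1 x + h2 x\<bar> / (a+b) \<le> (\<bar>h1 x\<bar> + \<bar>h2 x\<bar>) / (a+b)"
      using a b by (intro divide_right_mono abs_triangle_ineq) auto
    then have "\<Phi> (\<bar>h1 x + h2 x\<bar> / (a+b)) \<le> \<Phi> ((a/(a+b)) * (\<bar>h1 x\<bar> / a) + (b/(a+b)) * (\<bar>h2 x\<bar> / b))"
      unfolding eq by (intro nf_mono[OF nf]) (use a b in auto)
    also have "\<dots> \<le> (a/(a+b)) * \<Phi> (\<bar>h1 x\<bar> / a) + (b/(a+b)) * \<Phi> (\<bar>h2 x\<bar> / b)"
      by (rule nf_convex[OF nf _ _ ab1]) (use a b in auto)
    finally have le: "\<Phi> (\<bar>h1 x + h2 x\<bar> / (a+b)) \<le> (a/(a+b)) * \<Phi> (\<bar>h1 x\<bar> / a) + (b/(a+b)) * \<Phi> (\<bar>h2 x\<bar> / b)" .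
    have n1: "0 \<le> (a/(a+b)) * \<Phi> (\<bar>h1 x\<bar> / a)" using a b nf_nonneg[OF nf] by simp
    have n2: "0 \<le> (b/(a+b)) * \<Phi> (\<bar>h2 x\<bar> / b)" using a b nf_nonneg[OF nf] by simp
    have "ennreal ((a/(a+b)) * \<Phi> (\<bar>h1 x\<bar> / a) + (b/(a+b)) * \<Phi> (\<bar>h2 x\<bar> / b))
        = ennreal (a/(a+b)) * ennreal (\<Phi> (\<bar>h1 x\<bar> / a)) + ennreal (b/(a+b)) * ennreal (\<Phi> (\<bar>h2 x\<bar> / b))"
      unfolding ennreal_plus[OF n1 n2]
      using a b nf_nonneg[OF nf] ennreal_mult[of "a/(a+b)" "\<Phi> (\<bar>h1 x\<bar> / a)"]
         ennreal_mult[of "b/(a+b)" "\<Phi> (\<bar>h2 x\<bar> / b)"] by simp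
    with le show "ennreal (\<Phi> (\<bar>h1 x + h2 x\<bar> / (a+b))) \<le>
      ennreal (a/(a+b)) * ennreal (\<Phi> (\<bar>h1 x\<bar> / a)) + ennreal (b/(a+b)) * ennreal (\<Phi> (\<bar>h2 x\<bar> / b))"
      by (metis ennreal_leI)
  qed
  also have "\<dots> = ennreal (a/(a+b)) * modu M \<Phi> h1 a + ennreal (b/(a+b)) * modu M \<Phi> h2 b"
    unfolding modu_def by (simp add: nn_integral_add nn_integral_cmult)
  finally show ?thesis .
qed

lemma modu_add_le1:
  assumes nf: "N_function \<Phi>" and "h1 \<in> borel_measurable M" "h2 \<in> borel_measurable M"
    and a: "0 < a" and b: "0 < b" and "modu M \<Phi> h1 a \<le> 1" "modu M \<Phi> h2 b \<le> 1"
  shows "modu M \<Phi> (\<lambda>x. h1 x + h2 x) (a + b) \<le> 1"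
proof -
  have "modu M \<Phi> (\<lambda>x. h1 x + h2 x) (a + b) \<le>
           ennreal (a/(a+b)) * modu M \<Phi> h1 a + ennreal (b/(a+b)) * modu M \<Phi> h2 b"
    by (rule modu_add_le[OF assms(1-5)])
  also have "\<dots> \<le> ennreal (a/(a+b)) * 1 + ennreal (b/(a+b)) * 1"
    by (intro add_mono mult_left_mono) (use assms in auto)
  also have "\<dots> = ennreal (a/(a+b) + b/(a+b))" using a b by (simp add: ennreal_plus)
  also have "\<dots> = 1" using a b by (simp add: add_divide_distrib[symmetric])
  finally show ?thesis .
qed

lemma adm_add:
  assumes nf: "N_function \<Phi>" and "adm M \<Phi> h1" "adm M \<Phi> h2"
  shows "adm M \<Phi> (\<lambda>x. h1 x + h2 x)"
proof -
  obtain a where a: "0 < a" "modu M \<Phi> h1 a \<le> 1" and m1: "h1 \<in> borel_measurable M"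
    using assms(2) by (auto simp: adm_def)
  obtain b where b: "0 < b" "modu M \<Phi> h2 b \<le> 1" and m2: "h2 \<in> borel_measurable M"
    using assms(3) by (auto simp: adm_def)
  show ?thesis unfolding adm_def
    using modu_add_le1[OF nf m1 m2 a(1) b(1) a(2) b(2)] a b m1 m2
    by (intro conjI borel_measurable_add exI[of _ "a+b"]) auto
qed

lemma gauge_add:
  assumes nf: "N_function \<Phi>" and h1: "adm M \<Phi> h1" and h2: "adm M \<Phi> h2"
  shows "gauge_norm M \<Phi> (\<lambda>x. h1 x + h2 x) \<le> gauge_norm M \<Phi> h1 + gauge_norm M \<Phi> h2"
proof (rule field_le_epsilon)
  fix e :: real assume e: "0 < e"
  obtain a where a: "0 < a" "a < gauge_norm M \<Phi> h1 + e/2" "modu M \<Phi> h1 a \<le> 1"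
    using gauge_lt[OF h1, of "gauge_norm M \<Phi> h1 + e/2"] e by auto
  obtain b where b: "0 < b" "b < gauge_norm M \<Phi> h2 + e/2" "modu M \<Phi> h2 b \<le> 1"
    using gauge_lt[OF h2, of "gauge_norm M \<Phi> h2 + e/2"] e by auto
  have "gauge_norm M \<Phi> (\<lambda>x. h1 x + h2 x) \<le> a + b"
    using h1 h2 a b by (intro gauge_le modu_add_le1[OF nf]) (auto simp: adm_def)
  then show "gauge_norm M \<Phi> (\<lambda>x. h1 x + h2 x) \<le> gauge_norm M \<Phi> h1 + gauge_norm M \<Phi> h2 + e"
    using a b by linarith
qed

lemma modu_scale: assumes "0 < a" "0 < c" shows "modu M \<Phi> (\<lambda>x. a * h x) (a * c) = modu M \<Phi> h c"
proof -
  have "\<bar>a * h x\<bar> / (a * c) = \<bar>h x\<bar> / c" for x using assms by (simp add: abs_mult)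
  then show ?thesis unfolding modu_def by simp
qed

lemma adm_scale:
  assumes nf: "N_function \<Phi>" and h: "adm M \<Phi> h"
  shows "adm M \<Phi> (\<lambda>x. a * h x)"
proof (cases "a = 0")
  case True then show ?thesis using adm_zero[OF nf] by simp
next
  case False
  from h obtain c where c: "0 < c" "modu M \<Phi> h c \<le> 1" and [measurable]: "h \<in> borel_measurable M"
    by (auto simp: adm_def)
  have "modu M \<Phi> (\<lambda>x. a * h x) (\<bar>a\<bar> * c) = modu M \<Phi> h c"
    unfolding modu_def using False c by (simp add: abs_mult)
  then show ?thesis unfolding adm_def using c False by (intro conjI exI[of _ "\<bar>a\<bar> * c"]) auto
qed

lemma gauge_scale:
  assumes nf: "N_function \<Phi>" and h: "adm M \<Phi> h"
  shows "gauge_norm M \<Phi> (\<lambda>x. a * h x) \<le> \<bar>a\<bar> * gauge_norm M \<Phi> h"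
proof (cases "a = 0")
  case True then show ?thesis by (simp add: gauge_zero[OF nf])
next
  case False
  show ?thesis
  proof (rule field_le_epsilon)
    fix e :: real assume e: "0 < e"
    obtain c where c: "0 < c" "c < gauge_norm M \<Phi> h + e / \<bar>a\<bar>" "modu M \<Phi> h c \<le> 1"
      using gauge_lt[OF h, of "gauge_norm M \<Phi> h + e / \<bar>a\<bar>"] e False by auto
    have "modu M \<Phi> (\<lambda>x. a * h x) (\<bar>a\<bar> * c) = modu M \<Phi> h c"
      unfolding modu_def using False c by (simp add: abs_mult)
    then have "gauge_norm M \<Phi> (\<lambda>x. a * h x) \<le> \<bar>a\<bar> * c"
      using c False by (intro gauge_le) auto
    also have "\<dots> \<le> \<bar>a\<bar> * (gauge_norm M \<Phi> h + e / \<bar>a\<bar>)"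
      using c False by (intro mult_left_mono) auto
    also have "\<dots> = \<bar>a\<bar> * gauge_norm M \<Phi> h + e" using False by (simp add: algebra_simps)
    finally show "gauge_norm M \<Phi> (\<lambda>x. a * h x) \<le> \<bar>a\<bar> * gauge_norm M \<Phi> h + e" .
  qed
qed

lemma adm_diff:
  assumes nf: "N_function \<Phi>" and h: "adm M \<Phi> h1" "adm M \<Phi> h2"
  shows "adm M \<Phi> (\<lambda>x. h1 x - h2 x)"
  using adm_add[OF nf h(1) adm_neg[OF h(2)]] by simp

lemma gauge_diff:
  assumes nf: "N_function \<Phi>" and h1: "adm M \<Phi> h1" and h2: "adm M \<Phi> h2"
  shows "gauge_norm M \<Phi> (\<lambda>x. h1 x - h2 x) \<le> gauge_norm M \<Phi> h1 + gauge_norm M \<Phi> h2"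
  using gauge_add[OF nf h1 adm_neg[OF h2]] gauge_neg[of M \<Phi> h2] by simp

lemma adm_sum:
  assumes nf: "N_function \<Phi>"
  shows "finite S \<Longrightarrow> (\<And>i. i \<in> S \<Longrightarrow> adm M \<Phi> (h i)) \<Longrightarrow> adm M \<Phi> (\<lambda>x. \<Sum>i\<in>S. h i x)"
  by (induction S rule: finite_induct) (auto simp: adm_zero[OF nf] intro!: adm_add[OF nf])

lemma gauge_sum:
  assumes nf: "N_function \<Phi>"
  shows "finite S \<Longrightarrow> (\<And>i. i \<in> S \<Longrightarrow> adm M \<Phi> (h i)) \<Longrightarrow>
     gauge_norm M \<Phi> (\<lambda>x. \<Sum>i\<in>S. h i x) \<le> (\<Sum>i\<in>S. gauge_norm M \<Phi> (h i))"
proof (induction S rule: finite_induct)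
  case empty then show ?case by (simp add: gauge_zero[OF nf])
next
  case (insert j S)
  have "gauge_norm M \<Phi> (\<lambda>x. \<Sum>i\<in>insert j S. h i x) = gauge_norm M \<Phi> (\<lambda>x. h j x + (\<Sum>i\<in>S. h i x))"
    using insert by simp
  also have "\<dots> \<le> gauge_norm M \<Phi> (h j) + gauge_norm M \<Phi> (\<lambda>x. \<Sum>i\<in>S. h i x)"
    using insert by (intro gauge_add[OF nf] adm_sum[OF nf]) auto
  also have "\<dots> \<le> gauge_norm M \<Phi> (h j) + (\<Sum>i\<in>S. gauge_norm M \<Phi> (h i))"
    using insert by simp
  finally show ?case using insert by simp
qed



section \<open>Topology\<close>

lemma hausdorff_euclidean_t2: "Hausdorff_space (euclidean :: 'a::t2_space topology)"
  unfolding Hausdorff_space_def disjnt_def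
  apply clarsimp
  apply (drule hausdorff)
  by blast

lemma regular_lc:
  assumes "locally_compact_space (euclidean :: 'a::t2_space topology)"
  shows "regular_space (euclidean :: 'a topology)"
  using locally_compact_Hausdorff_imp_regular_space[OF assms hausdorff_euclidean_t2] .

lemma compact_closure_sub:
  fixes S K :: "'a::t2_space set"
  assumes "S \<subseteq> K" "compact K"
  shows "compact (closure S)" "closure S \<subseteq> K"
proof -
  show "closure S \<subseteq> K" using assms by (simp add: closure_minimal compact_imp_closed)
  then have "closure S = K \<inter> closure S" by blast
  then show "compact (closure S)" using assms compact_Int_closed[of K "closure S"] by simp
qed

lemma lc_nbhd:
  fixes x :: "'a::t2_space"
  assumes lc: "locally_compact_space (euclidean :: 'a topology)" and Op: "open Op" "x \<in> Op"
  shows "\<exists>W. open W \<and> x \<in> W \<and> compact (closure W) \<and> closure W \<subseteq> Op"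
proof -
  have reg: "regular_space (euclidean :: 'a topology)" by (rule regular_lc[OF lc])
  have "\<forall>K::'a set. compactin euclidean K \<longrightarrow> (\<exists>U L. openin euclidean U \<and> compactin euclidean L \<and> closedin euclidean L \<and> K \<subseteq> U \<and> U \<subseteq> L)"
    using iffD1[OF locally_compact_space_compact_closed_compact[OF disjI1[OF hausdorff_euclidean_t2]] lc] .
  then have "\<exists>U L. openin euclidean U \<and> compactin euclidean L \<and> closedin euclidean L \<and> {x} \<subseteq> U \<and> U \<subseteq> L"
    by (simp only: compactin_euclidean_iff compact_sing simp_thms)
  then obtain U L where "openin euclidean U" "compactin euclidean L" "closedin euclidean L" "{x} \<subseteq> U" "U \<subseteq> L"
    by metis
  then have UL: "open U" "compact L" "closed L" "{x} \<subseteq> U" "U \<subseteq> L"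
    by simp_all
  have "closed (- Op)" using Op by (simp add: closed_Compl)
  then have c1: "closedin euclidean (- Op)" by simp
  have c2: "x \<in> topspace euclidean - (- Op)" using Op by simp
  have "\<exists>A B. openin euclidean A \<and> openin euclidean B \<and> x \<in> A \<and> - Op \<subseteq> B \<and> disjnt A B"
    using reg[unfolded regular_space_def, rule_format, OF conjI[OF c1 c2]] .
  then obtain A B where "openin euclidean A" "openin euclidean B" "x \<in> A" "- Op \<subseteq> B" "disjnt A B"
    by blast
  then have AB: "open A" "open B" "x \<in> A" "- Op \<subseteq> B" "disjnt A B" by simp_all
  have "A \<subseteq> - B" using AB by (auto simp: disjnt_def)
  then have "closure A \<subseteq> - B" using AB by (intro closure_minimal) (auto simp: closed_Compl)
  then have cA: "closure A \<subseteq> Op" using AB by blast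
  show ?thesis
  proof (intro exI conjI)
    show "open (A \<inter> U)" using AB UL by auto
    show "x \<in> A \<inter> U" using AB UL by auto
    show "compact (closure (A \<inter> U))" using compact_closure_sub(1)[of "A \<inter> U" L] UL by auto
    show "closure (A \<inter> U) \<subseteq> Op" using cA closure_mono[of "A \<inter> U" A] by auto
  qed
qed

lemma Cc_I:
  fixes f :: "'a::t2_space \<Rightarrow> real"
  assumes "continuous_on UNIV f" "{x. f x \<noteq> 0} \<subseteq> K" "compact K"
  shows "f \<in> Cc"
  unfolding Cc_def using assms compact_closure_sub(1)[OF assms(2,3)] by auto

lemma CcD:
  assumes "f \<in> Cc" shows "continuous_on UNIV f" "compact (closure {x. f x \<noteq> 0})"
  using assms by (auto simp: Cc_def)

lemma lc_urysohn:
  fixes K U :: "'a::{t2_space} set"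
  assumes lc: "locally_compact_space (euclidean :: 'a topology)"
    and K: "compact K" and U: "open U" "K \<subseteq> U"
  shows "\<exists>\<phi>. \<phi> \<in> Cc \<and> (\<forall>x. 0 \<le> \<phi> x \<and> \<phi> x \<le> 1) \<and> (\<forall>x\<in>K. \<phi> x = 1) \<and> (\<forall>x. x \<notin> U \<longrightarrow> \<phi> x = 0)"
proof -
  have crs: "completely_regular_space (euclidean :: 'a topology)"
    by (rule locally_compact_regular_imp_completely_regular_space[OF lc]) (simp add: hausdorff_euclidean_t2)
  have "\<forall>K::'a set. compactin euclidean K \<longrightarrow> (\<exists>U L. openin euclidean U \<and> compactin euclidean L \<and> closedin euclidean L \<and> K \<subseteq> U \<and> U \<subseteq> L)"
    using iffD1[OF locally_compact_space_compact_closed_compact[OF disjI1[OF hausdorff_euclidean_t2]] lc] .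
  then have "\<exists>U L. openin euclidean U \<and> compactin euclidean L \<and> closedin euclidean L \<and> K \<subseteq> U \<and> U \<subseteq> L"
    using K by simp
  then obtain U' L where "openin euclidean U'" "compactin euclidean L" "K \<subseteq> U'" "U' \<subseteq> L"
    by metis
  then have UL: "open U'" "compact L" "K \<subseteq> U'" "U' \<subseteq> L" by simp_all
  have "closed (- (U \<inter> U'))" using U UL by (intro closed_Compl open_Int) auto
  then have cl: "closedin euclidean (- (U \<inter> U'))" by simp
  have dj: "disjnt K (- (U \<inter> U'))" using U UL by (auto simp: disjnt_def)
  obtain f where f: "continuous_map euclidean (top_of_set {0..1}) f" "f ` (- (U \<inter> U')) \<subseteq> {0}" "f ` K \<subseteq> {1::real}"
    using Urysohn_completely_regular_compact_closed[of 0 1 euclidean K "- (U \<inter> U')", OF _ crs _ cl dj] K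
    by auto
  have cont: "continuous_on UNIV f" and rng: "\<And>x. f x \<in> {0..1}"
    using f(1) unfolding continuous_map_in_subtopology by auto
  have z: "\<And>x. x \<notin> U \<inter> U' \<Longrightarrow> f x = 0" using f(2) by auto
  show ?thesis
  proof (intro exI conjI allI ballI impI)
    show "f \<in> Cc" by (rule Cc_I[OF cont _ UL(2)]) (use z UL in auto)
  qed (use rng f(3) z in auto)
qed

lemma open_sigma_compact:
  fixes Op :: "'a::{t2_space, second_countable_topology} set"
  assumes lc: "locally_compact_space (euclidean :: 'a topology)" and Op: "open Op"
  shows "\<exists>V K :: nat \<Rightarrow> 'a set. (\<forall>i. open (V i) \<and> compact (K i) \<and> V i \<subseteq> K i \<and> K i \<subseteq> Op) \<and> (\<Union>i. V i) = Op"
proof (cases "Op = {}")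
  case True then show ?thesis by (intro exI[of _ "\<lambda>i. {}"]) auto
next
  case False
  define F where "F = {V. open V \<and> (\<exists>K. compact K \<and> V \<subseteq> K \<and> K \<subseteq> Op)}"
  have UF: "\<Union>F = Op"
  proof
    show "\<Union>F \<subseteq> Op" unfolding F_def by blast
    show "Op \<subseteq> \<Union>F"
    proof
      fix x assume "x \<in> Op"
      then obtain W where "open W" "x \<in> W" "compact (closure W)" "closure W \<subseteq> Op"
        using lc_nbhd[OF lc Op] by blast
      then have "W \<in> F" unfolding F_def using closure_subset by blast
      then show "x \<in> \<Union>F" using \<open>x \<in> W\<close> by blast
    qed
  qed
  obtain F' where F': "F' \<subseteq> F" "countable F'" "\<Union>F' = \<Union>F"
    using Lindelof[of F] unfolding F_def by blast
  have ne: "F' \<noteq> {}" using F' UF False by auto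
  define V where "V = from_nat_into F'"
  have VF: "V i \<in> F" for i using from_nat_into[OF ne] F' V_def by auto
  then have "\<exists>K. compact K \<and> V i \<subseteq> K \<and> K \<subseteq> Op" for i unfolding F_def by auto
  then obtain K where K: "\<And>i. compact (K i) \<and> V i \<subseteq> K i \<and> K i \<subseteq> Op" by metis
  have "range V = F'" unfolding V_def using range_from_nat_into[OF ne F'(2)] .
  then have "(\<Union>i. V i) = Op" using F' UF by auto
  then show ?thesis using K VF unfolding F_def by (intro exI[of _ V] exI[of _ K]) auto
qed

section \<open>Groupoid facts\<close>

lemma range_map_cont:
  assumes "topological_groupoid G2 gm gi"
  shows "continuous_on UNIV (range_map gm gi)"
proof -
  have g: "groupoid G2 gm gi" and c1: "continuous_on G2 (\<lambda>p. gm (fst p) (snd p))" and c2: "continuous_on UNIV gi"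
    using assms by (auto simp: topological_groupoid_def)
  have inG2: "(\<lambda>x. (x, gi x)) ` UNIV \<subseteq> G2" using g by (auto simp: groupoid_def)
  have "continuous_on UNIV (\<lambda>x. (x, gi x))" by (intro continuous_intros c2)
  then have "continuous_on UNIV ((\<lambda>p. gm (fst p) (snd p)) \<circ> (\<lambda>x. (x, gi x)))"
    by (rule continuous_on_compose) (rule continuous_on_subset[OF c1 inG2])
  then show ?thesis by (simp add: range_map_def o_def)
qed

lemma unit_fix:
  assumes g: "groupoid G2 gm gi" and v: "v \<in> unit_space gm gi"
  shows "range_map gm gi v = v"
proof -
  from v obtain y where vy: "v = gm y (gi y)" by (auto simp: unit_space_def range_map_def)
  have A1: "\<And>x y z. (x, y) \<in> G2 \<Longrightarrow> (y, z) \<in> G2 \<Longrightarrow> (gm x y, z) \<in> G2 \<and> (x, gm y z) \<in> G2 \<and> gm (gm x y) z = gm x (gm y z)"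
    and A2: "\<And>x. gi (gi x) = x" and A3: "\<And>x. (x, gi x) \<in> G2"
    and A4: "\<And>x y. (x, y) \<in> G2 \<Longrightarrow> gm (gi x) (gm x y) = y"
    and A5: "\<And>x y. (x, y) \<in> G2 \<Longrightarrow> gm (gm x y) (gi y) = x"
    using g unfolding groupoid_def by blast+
  have yy': "(y, gi y) \<in> G2" by (rule A3)
  have y'y: "(gi y, y) \<in> G2" using A3[of "gi y"] A2 by simp
  have vG: "(v, y) \<in> G2" using A1[OF yy' y'y] vy by simp
  have vyy: "gm v y = y" using A5[OF yy'] A2 vy by simp
  have ivy: "gm (gi v) y = y" using A4[OF vG] vyy by simp
  have ivv: "(gi v, v) \<in> G2" using A3[of "gi v"] A2 by simp
  have ivyG: "(gi v, y) \<in> G2" using A1[OF ivv vG] vyy by simp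
  have w1: "gm (gi v) v = v" using A1[OF ivyG yy'] ivy vy by simp
  \<comment> \<open>now v = d(v); deduce r(v) = gi v, v v = v, gi v = v\<close>
  have "gm (gm (gi v) v) (gi v) = gi v" using A5[OF ivv] .
  then have rv: "gm v (gi v) = gi v" using w1 by simp
  have vvi: "(v, gi v) \<in> G2" by (rule A3)
  have vv: "(v, v) \<in> G2" using A1[OF vvi ivv] w1 by simp
  have "gm (gm v (gi v)) v = gm v (gm (gi v) v)" using A1[OF vvi ivv] by simp
  then have vvv: "gm v v = v" using rv w1 by simp
  have "gm (gm v v) (gi v) = v" using A5[OF vv] .
  then have "gi v = v" using vvv rv by simp
  then show ?thesis using rv by (simp add: range_map_def)
qed

lemma unit_space_eq:
  assumes g: "groupoid G2 gm gi"
  shows "unit_space gm gi = {x. range_map gm gi x = x}"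
proof
  show "unit_space gm gi \<subseteq> {x. range_map gm gi x = x}" using unit_fix[OF g] by auto
  show "{x. range_map gm gi x = x} \<subseteq> unit_space gm gi" unfolding unit_space_def by (auto, metis rangeI)
qed

lemma unit_space_closed:
  fixes gm :: "'g::t2_space \<Rightarrow> 'g \<Rightarrow> 'g"
  assumes "topological_groupoid G2 gm gi"
  shows "closed (unit_space gm gi)"
proof -
  have g: "groupoid G2 gm gi" using assms by (simp add: topological_groupoid_def)
  show ?thesis unfolding unit_space_eq[OF g]
    by (rule closed_Collect_eq[OF range_map_cont[OF assms] continuous_on_id])
qed



section \<open>Compactly supported functions\<close>

lemma Cc_zero: "(\<lambda>x. 0::real) \<in> (Cc :: ('a::t2_space \<Rightarrow> real) set)"
  by (rule Cc_I[of _ "{}"]) (auto intro: continuous_on_const)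

lemma Cc_add:
  fixes f g :: "'a::t2_space \<Rightarrow> real"
  assumes "f \<in> Cc" "g \<in> Cc" shows "(\<lambda>x. f x + g x) \<in> Cc"
proof (rule Cc_I[of _ "closure {x. f x \<noteq> 0} \<union> closure {x. g x \<noteq> 0}"])
  show "continuous_on UNIV (\<lambda>x. f x + g x)" using CcD[OF assms(1)] CcD[OF assms(2)] by (intro continuous_intros)
  show "{x. f x + g x \<noteq> 0} \<subseteq> closure {x. f x \<noteq> 0} \<union> closure {x. g x \<noteq> 0}"
    using closure_subset[of "{x. f x \<noteq> 0}"] closure_subset[of "{x. g x \<noteq> 0}"] by fastforce
  show "compact (closure {x. f x \<noteq> 0} \<union> closure {x. g x \<noteq> 0})"
    using CcD[OF assms(1)] CcD[OF assms(2)] by auto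
qed

lemma Cc_mult_cont:
  fixes f :: "'a::t2_space \<Rightarrow> real"
  assumes "continuous_on UNIV \<psi>" "f \<in> Cc" shows "(\<lambda>x. \<psi> x * f x) \<in> Cc"
proof (rule Cc_I[of _ "closure {x. f x \<noteq> 0}"])
  show "continuous_on UNIV (\<lambda>x. \<psi> x * f x)" using CcD[OF assms(2)] assms(1) by (intro continuous_intros)
  show "{x. \<psi> x * f x \<noteq> 0} \<subseteq> closure {x. f x \<noteq> 0}" using closure_subset[of "{x. f x \<noteq> 0}"] by fastforce
  show "compact (closure {x. f x \<noteq> 0})" using CcD[OF assms(2)] by auto
qed

lemma Cc_scale: "f \<in> Cc \<Longrightarrow> (\<lambda>x. a * f x) \<in> (Cc :: ('a::t2_space \<Rightarrow> real) set)"
  using Cc_mult_cont[of "\<lambda>x. a" f] by (simp add: continuous_on_const)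

lemma Cc_diff: "f \<in> Cc \<Longrightarrow> g \<in> Cc \<Longrightarrow> (\<lambda>x. f x - g x) \<in> (Cc :: ('a::t2_space \<Rightarrow> real) set)"
  using Cc_add[of f "\<lambda>x. (-1) * g x"] Cc_scale[of g "-1"] by simp

lemma Cc_sum: "finite S \<Longrightarrow> (\<And>i. i \<in> S \<Longrightarrow> f i \<in> Cc) \<Longrightarrow> (\<lambda>x. \<Sum>i\<in>S. f i x) \<in> (Cc :: ('a::t2_space \<Rightarrow> real) set)"
  by (induction S rule: finite_induct) (auto simp: Cc_zero intro!: Cc_add)

lemma Cc_max:
  fixes f g :: "'a::t2_space \<Rightarrow> real"
  assumes "f \<in> Cc" "g \<in> Cc" shows "(\<lambda>x. max (f x) (g x)) \<in> Cc"
proof (rule Cc_I[of _ "closure {x. f x \<noteq> 0} \<union> closure {x. g x \<noteq> 0}"])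
  show "continuous_on UNIV (\<lambda>x. max (f x) (g x))" using CcD[OF assms(1)] CcD[OF assms(2)] by (intro continuous_intros)
  show "{x. max (f x) (g x) \<noteq> 0} \<subseteq> closure {x. f x \<noteq> 0} \<union> closure {x. g x \<noteq> 0}"
  proof -
    have "{x. max (f x) (g x) \<noteq> 0} \<subseteq> {x. f x \<noteq> 0} \<union> {x. g x \<noteq> 0}" by (auto simp: max_def)
    then show ?thesis using closure_subset[of "{x. f x \<noteq> 0}"] closure_subset[of "{x. g x \<noteq> 0}"] by blast
  qed
  show "compact (closure {x. f x \<noteq> 0} \<union> closure {x. g x \<noteq> 0})"
    using CcD[OF assms(1)] CcD[OF assms(2)] by auto
qed

lemma Cc_comp:
  fixes f :: "'a::t2_space \<Rightarrow> real"
  assumes "continuous_on UNIV \<psi>" "\<psi> 0 = 0" "f \<in> Cc" shows "(\<lambda>x. \<psi> (f x)) \<in> Cc"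
proof (rule Cc_I[of _ "closure {x. f x \<noteq> 0}"])
  show "continuous_on UNIV (\<lambda>x. \<psi> (f x))"
    using continuous_on_compose[OF CcD(1)[OF assms(3)] continuous_on_subset[OF assms(1)]] by (simp add: o_def)
  show "{x. \<psi> (f x) \<noteq> 0} \<subseteq> closure {x. f x \<noteq> 0}" using closure_subset[of "{x. f x \<noteq> 0}"] assms(2) by fastforce
  show "compact (closure {x. f x \<noteq> 0})" using CcD[OF assms(3)] by auto
qed

lemma Cc_modfun:
  fixes f :: "'a::t2_space \<Rightarrow> real"
  assumes nf: "N_function \<Phi>" and "f \<in> Cc" shows "(\<lambda>x. \<Phi> (\<bar>f x\<bar> / c)) \<in> Cc"
proof -
  have "continuous_on UNIV (\<lambda>t::real. (1/c) * \<bar>t\<bar>)" by (intro continuous_intros)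
  then have "continuous_on UNIV (\<lambda>t::real. \<bar>t\<bar> / c)" by simp
  then have "continuous_on UNIV (\<Phi> \<circ> (\<lambda>t::real. \<bar>t\<bar> / c))"
    by (rule continuous_on_compose) (rule continuous_on_subset[OF nf_cont[OF nf]], simp)
  then have "continuous_on UNIV (\<lambda>t. \<Phi> (\<bar>t\<bar> / c))" by (simp add: o_def)
  then show ?thesis using Cc_comp[of "\<lambda>t. \<Phi> (\<bar>t\<bar> / c)" f] assms nf_0[OF nf] by simp
qed

section \<open>Radon measures\<close>

lemma rm_sets: "radon_measure M \<Longrightarrow> sets M = sets borel"
  by (simp add: radon_measure_def)

lemma rm_space: "radon_measure M \<Longrightarrow> space M = UNIV"
  using sets_eq_imp_space_eq[OF rm_sets] by simp

lemma rm_finite: "radon_measure M \<Longrightarrow> compact K \<Longrightarrow> emeasure M K < \<infinity>"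
  by (simp add: radon_measure_def)

lemma rm_meas_cont: "radon_measure M \<Longrightarrow> continuous_on UNIV f \<Longrightarrow> f \<in> borel_measurable M"
  using measurable_cong_sets[OF rm_sets[symmetric] refl, of M] borel_measurable_continuous_onI by blast

lemma rm_borel: "radon_measure M \<Longrightarrow> f \<in> borel_measurable borel \<Longrightarrow> f \<in> borel_measurable M"
  using measurable_cong_sets[OF rm_sets[symmetric] refl, of M] by blast

lemma rm_integrable:
  fixes f :: "'a::t2_space \<Rightarrow> real"
  assumes M: "radon_measure M" and f: "f \<in> Cc"
  shows "integrable M f"
proof -
  let ?S = "closure {x. f x \<noteq> 0}"
  have S: "compact ?S" and cont: "continuous_on UNIV f" using CcD[OF f] by auto
  have "compact (f ` ?S)" by (rule compact_continuous_image[OF continuous_on_subset[OF cont] S]) auto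
  then obtain B where B: "\<And>y. y \<in> f ` ?S \<Longrightarrow> norm y \<le> B"
    using compact_imp_bounded bounded_iff by metis
  show ?thesis
  proof (rule integrableI_bounded_set[where A = ?S and B = B])
    show "?S \<in> sets M" using rm_sets[OF M] by simp
    show "f \<in> borel_measurable M" by (rule rm_meas_cont[OF M cont])
    show "emeasure M ?S < \<infinity>" by (rule rm_finite[OF M S])
    show "AE x\<in>?S in M. norm (f x) \<le> B" by (intro AE_I2 impI B imageI)
    have "x \<notin> ?S \<longrightarrow> f x = 0" for x using closure_subset[of "{x. f x \<noteq> 0}"] by auto
    then show "AE x in M. x \<notin> ?S \<longrightarrow> f x = 0" by (intro AE_I2)
  qed
qed

lemma rm_nn_integral:
  fixes f :: "'a::t2_space \<Rightarrow> real"
  assumes M: "radon_measure M" and f: "f \<in> Cc" and nn: "\<And>x. 0 \<le> f x"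
  shows "(\<integral>\<^sup>+x. ennreal (f x) \<partial>M) = ennreal (integral\<^sup>L M f)"
  using nn_integral_eq_integral[OF rm_integrable[OF M f]] nn by simp

lemma orlicz_adm:
  assumes nf: "N_function \<Phi>" and h: "h \<in> orlicz_space M \<Phi>"
  shows "adm M \<Phi> h"
proof -
  from h obtain \<alpha> where hm: "h \<in> borel_measurable M" and a: "\<alpha> > 0"
    and I: "(\<integral>\<^sup>+ x. ennreal (\<Phi> (\<alpha> * \<bar>h x\<bar>)) \<partial>M) < \<infinity>"
    by (auto simp: orlicz_space_def)
  have eq: "modu M \<Phi> h (1/\<alpha>) = (\<integral>\<^sup>+ x. ennreal (\<Phi> (\<alpha> * \<bar>h x\<bar>)) \<partial>M)"
    unfolding modu_def using a by (simp add: mult.commute)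
  define R where "R = enn2real (modu M \<Phi> h (1/\<alpha>))"
  have R: "modu M \<Phi> h (1/\<alpha>) = ennreal R" "R \<ge> 0" using I eq unfolding R_def
    by (auto simp: ennreal_enn2real_if less_top)
  have "modu M \<Phi> h ((1/\<alpha>) * (R+1)) \<le> ennreal ((1/\<alpha>) / ((1/\<alpha>) * (R+1))) * modu M \<Phi> h (1/\<alpha>)"
  proof (rule modu_scale_c[OF nf _ _ hm])
    show "0 < 1/\<alpha>" using a by simp
    have "(1/\<alpha>)*1 \<le> (1/\<alpha>)*(R+1)" using a R by (intro mult_left_mono) auto
    then show "1/\<alpha> \<le> (1/\<alpha>)*(R+1)" by simp
  qed
  also have "\<dots> = ennreal (1/(R+1)) * ennreal R" using a R by simp
  also have "\<dots> = ennreal (R/(R+1))" using R by (simp add: ennreal_mult[symmetric])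
  also have "\<dots> \<le> 1" using R by simp
  finally show ?thesis unfolding adm_def using hm a R
    by (intro conjI exI[of _ "(1/\<alpha>) * (R+1)"]) auto
qed

lemma rm_orlicz:
  fixes f :: "'a::t2_space \<Rightarrow> real"
  assumes nf: "N_function \<Phi>" and M: "radon_measure M" and f: "f \<in> Cc"
  shows "f \<in> orlicz_space M \<Phi>"
proof -
  have F: "(\<lambda>x. \<Phi> (\<bar>f x\<bar> / 1)) \<in> Cc" by (rule Cc_modfun[OF nf f])
  have "(\<integral>\<^sup>+ x. ennreal (\<Phi> (1 * \<bar>f x\<bar>)) \<partial>M) = ennreal (integral\<^sup>L M (\<lambda>x. \<Phi> (\<bar>f x\<bar> / 1)))"
    using rm_nn_integral[OF M F] nf_nonneg[OF nf] by simp
  then show ?thesis unfolding orlicz_space_def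
    using rm_meas_cont[OF M CcD(1)[OF f]] by (intro CollectI conjI exI[of _ 1]) auto
qed

lemma rm_adm:
  fixes f :: "'a::t2_space \<Rightarrow> real"
  shows "N_function \<Phi> \<Longrightarrow> radon_measure M \<Longrightarrow> f \<in> Cc \<Longrightarrow> adm M \<Phi> f"
  by (rule orlicz_adm) (auto intro: rm_orlicz)

lemma supp_AE:
  fixes M :: "'a::second_countable_topology measure"
  assumes "sets M = sets borel"
  shows "AE x in M. x \<in> measure_support M"
proof -
  define F where "F = {U. open U \<and> emeasure M U = 0}"
  obtain F' where F': "F' \<subseteq> F" "countable F'" "\<Union>F' = \<Union>F"
    using Lindelof[of F] unfolding F_def by blast
  have "(\<Union>U\<in>F'. U) \<in> null_sets M"
  proof (rule null_sets_UN'[OF F'(2)])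
    fix U assume "U \<in> F'"
    then have "open U" "emeasure M U = 0" using F' unfolding F_def by auto
    then show "U \<in> null_sets M" using assms by (auto simp: null_sets_def)
  qed
  moreover have "{x \<in> space M. x \<notin> measure_support M} \<subseteq> (\<Union>U\<in>F'. U)"
  proof
    fix x assume "x \<in> {x \<in> space M. x \<notin> measure_support M}"
    then obtain U where "open U" "x \<in> U" "\<not> emeasure M U > 0" unfolding measure_support_def by auto
    then have "U \<in> F" unfolding F_def by (auto simp: not_gr_zero)
    then show "x \<in> (\<Union>U\<in>F'. U)" using F' \<open>x \<in> U\<close> by auto
  qed
  ultimately show ?thesis by (rule AE_I')
qed

section \<open>Haar systems\<close>

lemma lhs_radon: "left_haar_system G2 gm gi lam \<Longrightarrow> v \<in> unit_space gm gi \<Longrightarrow> radon_measure (lam v)"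
  by (simp add: left_haar_system_def)

lemma lhs_fibre_AE:
  fixes gm :: "'g::second_countable_topology \<Rightarrow> 'g \<Rightarrow> 'g"
  assumes "left_haar_system G2 gm gi lam" "v \<in> unit_space gm gi"
  shows "AE x in lam v. range_map gm gi x = v"
proof -
  have "measure_support (lam v) = range_fibre gm gi v" "radon_measure (lam v)"
    using assms by (auto simp: left_haar_system_def)
  then show ?thesis using supp_AE[OF rm_sets, of "lam v"] by (simp add: range_fibre_def)
qed

lemma gauge_usc:
  fixes gm :: "'g::{t2_space, second_countable_topology} \<Rightarrow> 'g \<Rightarrow> 'g"
  assumes lhs: "left_haar_system G2 gm gi lam" and nf: "N_function \<Phi>"
    and h: "h \<in> Cc" and v0: "v0 \<in> unit_space gm gi" and lt: "gauge_norm (lam v0) \<Phi> h < d"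
  shows "\<exists>V. open V \<and> v0 \<in> V \<and> (\<forall>v \<in> V \<inter> unit_space gm gi. gauge_norm (lam v) \<Phi> h < d)"
proof -
  have adm0: "adm (lam v0) \<Phi> h" using rm_adm[OF nf lhs_radon[OF lhs v0] h] .
  obtain c where c: "0 < c" "c < d" "modu (lam v0) \<Phi> h c \<le> 1" using gauge_lt[OF adm0 lt] by blast
  define c' where "c' = (c + d) / 2"
  have c': "c < c'" "c' < d" "0 < c'" using c unfolding c'_def by auto
  have hm: "h \<in> borel_measurable (lam v0)" using adm0 by (simp add: adm_def)
  have "modu (lam v0) \<Phi> h c' \<le> ennreal (c/c') * modu (lam v0) \<Phi> h c"
    by (rule modu_scale_c[OF nf c(1) _ hm]) (use c' in auto)
  also have "\<dots> \<le> ennreal (c/c') * 1" by (rule mult_left_mono) (use c in auto)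
  also have "\<dots> < 1" using c c' by simp
  finally have m0: "modu (lam v0) \<Phi> h c' < 1" .
  define F where "F = (\<lambda>x. \<Phi> (\<bar>h x\<bar> / c'))"
  have F: "F \<in> Cc" unfolding F_def by (rule Cc_modfun[OF nf h])
  define J where "J = (\<lambda>v. integral\<^sup>L (lam v) F)"
  have modJ: "modu (lam v) \<Phi> h c' = ennreal (J v)" if "v \<in> unit_space gm gi" for v
    unfolding modu_def J_def F_def
    using rm_nn_integral[OF lhs_radon[OF lhs that] F] nf_nonneg[OF nf] by (simp add: F_def)
  have "J v0 < 1" using m0 modJ[OF v0] by (simp add: ennreal_less_iff)
  have contJ: "continuous_on (unit_space gm gi) J"
    using lhs F unfolding left_haar_system_def J_def by blast
  have "J v0 \<in> {..<1}" using \<open>J v0 < 1\<close> by simp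
  from contJ[unfolded continuous_on_topological, rule_format, OF v0 open_lessThan this]
  obtain A where A: "open A" "v0 \<in> A" "\<forall>y\<in>unit_space gm gi. y \<in> A \<longrightarrow> J y \<in> {..<1}"
    by blast
  show ?thesis
  proof (intro exI conjI ballI)
    show "open A" "v0 \<in> A" using A by auto
    fix v assume v: "v \<in> A \<inter> unit_space gm gi"
    then have "J v < 1" using A by auto
    then have "ennreal (J v) \<le> 1" by (simp add: ennreal_leI)
    then have "modu (lam v) \<Phi> h c' \<le> 1" using modJ v by simp
    then have "gauge_norm (lam v) \<Phi> h \<le> c'" using gauge_le c' by blast
    then show "gauge_norm (lam v) \<Phi> h < d" using c' by simp
  qed
qed



section \<open>Density of Cc in Orlicz spaces\<close>

definition apx :: "'a::t2_space measure \<Rightarrow> (real \<Rightarrow> real) \<Rightarrow> ('a \<Rightarrow> real) \<Rightarrow> bool" where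
  "apx M \<Phi> h \<longleftrightarrow> (\<forall>c>0. \<forall>\<delta>>0. \<exists>f\<in>Cc. modu M \<Phi> (\<lambda>x. h x - f x) c \<le> ennreal \<delta>)"

lemma modu_tri:
  assumes nf: "N_function \<Phi>" and m: "h1 \<in> borel_measurable M" "h2 \<in> borel_measurable M" and c: "0 < c"
  shows "modu M \<Phi> (\<lambda>x. h1 x + h2 x) c \<le> modu M \<Phi> h1 (c/2) + modu M \<Phi> h2 (c/2)"
proof -
  have "modu M \<Phi> (\<lambda>x. h1 x + h2 x) (c/2 + c/2) \<le>
      ennreal ((c/2)/(c/2+c/2)) * modu M \<Phi> h1 (c/2) + ennreal ((c/2)/(c/2+c/2)) * modu M \<Phi> h2 (c/2)"
    by (rule modu_add_le[OF nf m]) (use c in auto)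
  also have "\<dots> \<le> 1 * modu M \<Phi> h1 (c/2) + 1 * modu M \<Phi> h2 (c/2)"
  proof -
    have "(c/2)/(c/2+c/2) \<le> 1" using c by simp
    then have "ennreal ((c/2)/(c/2+c/2)) \<le> 1" using ennreal_leI by fastforce
    then show ?thesis by (intro add_mono mult_right_mono) auto
  qed
  finally show ?thesis by simp
qed

lemma apx_Cc: "N_function \<Phi> \<Longrightarrow> f \<in> Cc \<Longrightarrow> apx M \<Phi> f"
  unfolding apx_def by (auto intro!: bexI[of _ f] simp: modu_zero)

lemma apx_zero: "N_function \<Phi> \<Longrightarrow> apx M \<Phi> (\<lambda>x. 0)"
  by (rule apx_Cc) (auto intro: Cc_zero)

lemma apx_add:
  assumes nf: "N_function \<Phi>" and M: "radon_measure M"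
    and m: "h1 \<in> borel_measurable M" "h2 \<in> borel_measurable M"
    and a: "apx M \<Phi> h1" "apx M \<Phi> h2"
  shows "apx M \<Phi> (\<lambda>x. h1 x + h2 x)"
  unfolding apx_def
proof (intro allI impI)
  fix c \<delta> :: real assume c: "0 < c" and d: "0 < \<delta>"
  obtain f1 where f1: "f1 \<in> Cc" "modu M \<Phi> (\<lambda>x. h1 x - f1 x) (c/2) \<le> ennreal (\<delta>/2)"
    using a(1) c d unfolding apx_def by (meson half_gt_zero)
  obtain f2 where f2: "f2 \<in> Cc" "modu M \<Phi> (\<lambda>x. h2 x - f2 x) (c/2) \<le> ennreal (\<delta>/2)"
    using a(2) c d unfolding apx_def by (meson half_gt_zero)
  have mf1: "f1 \<in> borel_measurable M" "f2 \<in> borel_measurable M"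
    using rm_meas_cont[OF M CcD(1)] f1 f2 by auto
  have "modu M \<Phi> (\<lambda>x. (h1 x - f1 x) + (h2 x - f2 x)) c \<le>
      modu M \<Phi> (\<lambda>x. h1 x - f1 x) (c/2) + modu M \<Phi> (\<lambda>x. h2 x - f2 x) (c/2)"
    by (rule modu_tri[OF nf _ _ c]) (use m mf1 in auto)
  also have "\<dots> \<le> ennreal (\<delta>/2) + ennreal (\<delta>/2)" using f1 f2 by (intro add_mono) auto
  also have "\<dots> = ennreal \<delta>" using d by (simp add: ennreal_plus[symmetric])
  finally have "modu M \<Phi> (\<lambda>x. (h1 x + h2 x) - (f1 x + f2 x)) c \<le> ennreal \<delta>"
    by (simp add: algebra_simps)
  moreover have "(\<lambda>x. f1 x + f2 x) \<in> Cc" using f1 f2 by (intro Cc_add) auto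
  ultimately show "\<exists>f\<in>Cc. modu M \<Phi> (\<lambda>x. h1 x + h2 x - f x) c \<le> ennreal \<delta>"
    by (intro bexI[where x="\<lambda>x. f1 x + f2 x"]) simp_all
qed

lemma apx_scale:
  assumes nf: "N_function \<Phi>" and a: "a \<noteq> 0 \<Longrightarrow> apx M \<Phi> h"
  shows "apx M \<Phi> (\<lambda>x. a * h x)"
proof (cases "a = 0")
  case True then show ?thesis using apx_zero[OF nf] by simp
next
  case False
  show ?thesis unfolding apx_def
  proof (intro allI impI)
    fix c \<delta> :: real assume c: "0 < c" and d: "0 < \<delta>"
    obtain f where f: "f \<in> Cc" "modu M \<Phi> (\<lambda>x. h x - f x) (c / \<bar>a\<bar>) \<le> ennreal \<delta>"
      using a[OF False] c d False unfolding apx_def by (meson divide_pos_pos zero_less_abs_iff)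
    have eq: "\<bar>a * h x - a * f x\<bar> / c = \<bar>h x - f x\<bar> / (c / \<bar>a\<bar>)" for x
    proof -
      have "\<bar>a * h x - a * f x\<bar> = \<bar>a\<bar> * \<bar>h x - f x\<bar>" by (simp add: right_diff_distrib[symmetric] abs_mult)
      then show ?thesis using False c by simp
    qed
    have "modu M \<Phi> (\<lambda>x. a * h x - a * f x) c = modu M \<Phi> (\<lambda>x. h x - f x) (c / \<bar>a\<bar>)"
      unfolding modu_def by (rule nn_integral_cong) (simp only: eq)
    then show "\<exists>f\<in>Cc. modu M \<Phi> (\<lambda>x. a * h x - f x) c \<le> ennreal \<delta>"
      using f Cc_scale[OF f(1), of a] by (intro bexI[of _ "\<lambda>x. a * f x"]) auto
  qed
qed

lemma apx_lim:
  assumes nf: "N_function \<Phi>" and M: "radon_measure M"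
    and m: "h \<in> borel_measurable M" "\<And>n. hn n \<in> borel_measurable M"
    and a: "\<And>n. apx M \<Phi> (hn n)"
    and lim: "\<And>c. 0 < c \<Longrightarrow> (\<lambda>n. modu M \<Phi> (\<lambda>x. h x - hn n x) c) \<longlonglongrightarrow> 0"
  shows "apx M \<Phi> h"
  unfolding apx_def
proof (intro allI impI)
  fix c \<delta> :: real assume c: "0 < c" and d: "0 < \<delta>"
  have "0 < ennreal (\<delta>/2)" using d by simp
  from order_tendstoD(2)[OF lim[of "c/2"] this] c
  obtain N where N: "modu M \<Phi> (\<lambda>x. h x - hn N x) (c/2) < ennreal (\<delta>/2)"
    by (auto dest: eventually_happens)
  obtain f where f: "f \<in> Cc" "modu M \<Phi> (\<lambda>x. hn N x - f x) (c/2) \<le> ennreal (\<delta>/2)"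
    using a[of N] c d unfolding apx_def by (meson half_gt_zero)
  have mf: "f \<in> borel_measurable M" using rm_meas_cont[OF M CcD(1)[OF f(1)]] .
  have "modu M \<Phi> (\<lambda>x. (h x - hn N x) + (hn N x - f x)) c \<le>
      modu M \<Phi> (\<lambda>x. h x - hn N x) (c/2) + modu M \<Phi> (\<lambda>x. hn N x - f x) (c/2)"
    by (rule modu_tri[OF nf _ _ c]) (use m mf in auto)
  also have "\<dots> \<le> ennreal (\<delta>/2) + ennreal (\<delta>/2)" using f N by (intro add_mono) auto
  also have "\<dots> = ennreal \<delta>" using d by (simp add: ennreal_plus[symmetric])
  finally have "modu M \<Phi> (\<lambda>x. h x - f x) c \<le> ennreal \<delta>" by simp
  then show "\<exists>f\<in>Cc. modu M \<Phi> (\<lambda>x. h x - f x) c \<le> ennreal \<delta>" using f by blast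
qed

lemma modu_dconv:
  assumes nf: "N_function \<Phi>" and c: "0 < c"
    and m [measurable]: "h \<in> borel_measurable M" "\<And>n. hn n \<in> borel_measurable M" "w \<in> borel_measurable M"
    and bound: "\<And>n x. \<Phi> (\<bar>h x - hn n x\<bar> / c) \<le> w x"
    and w: "(\<integral>\<^sup>+ x. ennreal (w x) \<partial>M) < \<infinity>"
    and conv: "\<And>x. (\<lambda>n. hn n x) \<longlonglongrightarrow> h x"
  shows "(\<lambda>n. modu M \<Phi> (\<lambda>x. h x - hn n x) c) \<longlonglongrightarrow> 0"
proof -
  have [measurable]: "\<Phi> \<in> borel_measurable borel" by (rule nf_meas[OF nf])
  have ic: "isCont \<Phi> 0" using nf_cont[OF nf] continuous_on_eq_continuous_at[OF open_UNIV] by blast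
  have "(\<lambda>i. \<integral>\<^sup>+ x. ennreal (norm ((\<lambda>x. 0::real) x - (\<lambda>i x. \<Phi> (\<bar>h x - hn i x\<bar> / c)) i x)) \<partial>M) \<longlonglongrightarrow> 0"
  proof (rule nn_integral_dominated_convergence_norm[where w = w])
    show "\<And>j. AE x in M. norm (\<Phi> (\<bar>h x - hn j x\<bar> / c)) \<le> w x"
      using bound nf_nonneg[OF nf] by (intro AE_I2) simp
    show "(\<integral>\<^sup>+ x. ennreal (w x) \<partial>M) < \<infinity>" by (rule w)
    show "AE x in M. (\<lambda>i. \<Phi> (\<bar>h x - hn i x\<bar> / c)) \<longlonglongrightarrow> 0"
    proof (intro AE_I2)
      fix x
      have "(\<lambda>i. \<bar>h x - hn i x\<bar> / c) \<longlonglongrightarrow> \<bar>h x - h x\<bar> / c"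
        using c by (intro tendsto_intros conv) auto
      then have "(\<lambda>i. \<Phi> (\<bar>h x - hn i x\<bar> / c)) \<longlonglongrightarrow> \<Phi> 0"
        using isCont_tendsto_compose[OF ic] by simp
      then show "(\<lambda>i. \<Phi> (\<bar>h x - hn i x\<bar> / c)) \<longlonglongrightarrow> 0" using nf_0[OF nf] by simp
    qed
  qed measurable
  then show ?thesis unfolding modu_def using nf_nonneg[OF nf] by simp
qed



lemma nn_ind_fin:
  assumes "A \<in> sets M" "emeasure M A < \<infinity>" "0 \<le> a"
  shows "(\<integral>\<^sup>+x. ennreal (a * indicator A x) \<partial>M) < \<infinity>"
proof -
  have "(\<integral>\<^sup>+x. ennreal (a * indicator A x) \<partial>M) = (\<integral>\<^sup>+x. ennreal a * indicator A x \<partial>M)"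
    by (rule nn_integral_cong) (auto simp: indicator_def)
  also have "\<dots> = ennreal a * emeasure M A" using nn_integral_cmult_indicator[OF assms(1)] by simp
  also have "\<dots> < \<infinity>" using assms(2) by (simp add: ennreal_mult_less_top)
  finally show ?thesis .
qed

lemma ind_bound:
  assumes nf: "N_function \<Phi>" and c: "0 < c"
    and z: "x \<notin> A \<Longrightarrow> g x = 0" and b: "x \<in> A \<Longrightarrow> \<bar>g x\<bar> \<le> 1"
  shows "\<Phi> (\<bar>g x\<bar> / c) \<le> \<Phi> (1/c) * indicator A x"
proof (cases "x \<in> A")
  case True
  have "\<bar>g x\<bar> / c \<le> 1 / c" using b[OF True] c by (simp add: divide_right_mono)
  then show ?thesis using True nf_mono[OF nf, of "\<bar>g x\<bar> / c" "1/c"] c by simp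
next
  case False then show ?thesis using z nf_0[OF nf] by simp
qed

lemma ind_diff_le: "\<bar>indicator S x - indicator T x :: real\<bar> \<le> 1"
  by (simp add: indicator_def)

lemma apx_open:
  fixes M :: "'a::{t2_space, second_countable_topology} measure"
  assumes nf: "N_function \<Phi>" and M: "radon_measure M"
    and lc: "locally_compact_space (euclidean :: 'a topology)"
    and Op: "open Op" and fin: "emeasure M Op < \<infinity>"
  shows "apx M \<Phi> (indicator Op)"
proof -
  obtain V K where VK: "\<forall>i::nat. open (V i) \<and> compact (K i) \<and> V i \<subseteq> K i \<and> K i \<subseteq> Op" "(\<Union>i. V i) = Op"
    using open_sigma_compact[OF lc Op] by blast
  have "\<forall>i. \<exists>\<phi>. \<phi> \<in> Cc \<and> (\<forall>x. 0 \<le> \<phi> x \<and> \<phi> x \<le> 1) \<and> (\<forall>x\<in>K i. \<phi> x = 1) \<and> (\<forall>x. x \<notin> Op \<longrightarrow> \<phi> x = 0)"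
  proof
    fix i
    have "compact (K i)" "K i \<subseteq> Op" using VK(1) by auto
    then show "\<exists>\<phi>. \<phi> \<in> Cc \<and> (\<forall>x. 0 \<le> \<phi> x \<and> \<phi> x \<le> 1) \<and> (\<forall>x\<in>K i. \<phi> x = 1) \<and> (\<forall>x. x \<notin> Op \<longrightarrow> \<phi> x = 0)"
      using lc_urysohn[OF lc _ Op] by simp
  qed
  from choice[OF this] obtain \<phi> where \<phi>all: "\<forall>i. \<phi> i \<in> Cc \<and> (\<forall>x. 0 \<le> \<phi> i x \<and> \<phi> i x \<le> 1) \<and> (\<forall>x\<in>K i. \<phi> i x = 1) \<and> (\<forall>x. x \<notin> Op \<longrightarrow> \<phi> i x = 0)"
    by (elim exE)
  have \<phi>: "\<And>i. \<phi> i \<in> Cc" "\<And>i x. 0 \<le> \<phi> i x" "\<And>i x. \<phi> i x \<le> 1"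
    "\<And>i x. x \<in> K i \<Longrightarrow> \<phi> i x = 1" "\<And>i x. x \<notin> Op \<Longrightarrow> \<phi> i x = 0"
    using \<phi>all by auto
  define gs where "gs = rec_nat (\<lambda>x. 0::real) (\<lambda>n g x. max (g x) (\<phi> n x))"
  have gs0: "gs 0 = (\<lambda>x. 0)" and gsS: "\<And>n. gs (Suc n) = (\<lambda>x. max (gs n x) (\<phi> n x))"
    by (simp_all add: gs_def)
  have gsCc: "gs n \<in> Cc" for n
    by (induction n) (auto simp: gs0 gsS intro: Cc_zero Cc_max \<phi>(1))
  have gsb: "0 \<le> gs n x \<and> gs n x \<le> 1" for n x
    by (induction n) (auto simp: gs0 gsS \<phi>(2,3) le_max_iff_disj)
  have gsz: "x \<notin> Op \<Longrightarrow> gs n x = 0" for n x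
    by (induction n) (auto simp: gs0 gsS \<phi>(5))
  have gs1: "x \<in> V i \<Longrightarrow> i < n \<Longrightarrow> gs n x = 1" for i n x
  proof (induction n)
    case 0 then show ?case by simp
  next
    case (Suc n)
    show ?case
    proof (cases "i = n")
      case True
      then have "x \<in> K n" using Suc.prems VK(1) by auto
      then have "\<phi> n x = 1" using \<phi>(4) by simp
      then show ?thesis using gsb[of n x] by (simp add: gsS)
    next
      case False
      then have "gs n x = 1" using Suc by simp
      then show ?thesis using \<phi>(3)[of n x] by (simp add: gsS)
    qed
  qed
  have conv: "(\<lambda>n. gs n x) \<longlonglongrightarrow> indicator Op x" for x
  proof (cases "x \<in> Op")
    case True
    then obtain i where "x \<in> V i" using VK(2) by blast
    then have "\<forall>n\<ge>Suc i. gs n x = indicator Op x" using gs1 True by auto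
    then show ?thesis by (intro tendsto_eventually) (auto simp: eventually_sequentially)
  next
    case False
    then show ?thesis using gsz by simp
  qed
  have OpM: "Op \<in> sets M" using rm_sets[OF M] Op by simp
  show ?thesis
  proof (rule apx_lim[OF nf M _ _ apx_Cc[OF nf gsCc]])
    show "indicator Op \<in> borel_measurable M" using OpM by simp
    show "gs n \<in> borel_measurable M" for n using rm_meas_cont[OF M CcD(1)[OF gsCc]] .
    fix c :: real assume c: "0 < c"
    show "(\<lambda>n. modu M \<Phi> (\<lambda>x. indicator Op x - gs n x) c) \<longlonglongrightarrow> 0"
    proof (rule modu_dconv[OF nf c, where w = "\<lambda>x. \<Phi> (1/c) * indicator Op x"])
      show "indicator Op \<in> borel_measurable M" using OpM by simp
      show "gs n \<in> borel_measurable M" for n using rm_meas_cont[OF M CcD(1)[OF gsCc]] .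
      show "(\<lambda>x. \<Phi> (1/c) * indicator Op x) \<in> borel_measurable M" using OpM by simp
      show "\<Phi> (\<bar>indicator Op x - gs n x\<bar> / c) \<le> \<Phi> (1/c) * indicator Op x" for n x
        by (rule ind_bound[OF nf c]) (use gsz gsb[of n x] in \<open>auto simp: indicator_def\<close>)
      show "(\<integral>\<^sup>+ x. ennreal (\<Phi> (1/c) * indicator Op x) \<partial>M) < \<infinity>"
        by (rule nn_ind_fin[OF OpM fin nf_nonneg[OF nf]])
      show "(\<lambda>n. gs n x) \<longlonglongrightarrow> indicator Op x" for x by (rule conv)
    qed
  qed
qed

lemma apx_borel_W:
  fixes M :: "'a::{t2_space, second_countable_topology} measure"
  assumes nf: "N_function \<Phi>" and M: "radon_measure M"
    and lc: "locally_compact_space (euclidean :: 'a topology)"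
    and W: "open W" "emeasure M W < \<infinity>" and B: "B \<in> sets borel"
  shows "apx M \<Phi> (indicator (B \<inter> W))"
proof -
  have WM: "W \<in> sets M" using rm_sets[OF M] W by simp
  have sM: "A \<in> sigma_sets UNIV {S. open S} \<Longrightarrow> A \<in> sets M" for A by (simp only: rm_sets[OF M] sets_borel)
  have basicW: "apx M \<Phi> (indicator (A \<inter> W))" if "open A" for A
  proof (rule apx_open[OF nf M lc])
    show "open (A \<inter> W)" using that W by auto
    have "emeasure M (A \<inter> W) \<le> emeasure M W" by (rule emeasure_mono) (use WM in auto)
    then show "emeasure M (A \<inter> W) < \<infinity>" using W by auto
  qed
  have IS: "Int_stable {S::'a set. open S}" by (auto simp: Int_stable_def)
  have CL: "{S::'a set. open S} \<subseteq> Pow UNIV" by auto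
  have B': "B \<in> sigma_sets UNIV {S. open S}" using B unfolding sets_borel .
  from IS CL B' show ?thesis
  proof (induct rule: sigma_sets_induct_disjoint)
    case (basic A) then show ?case using basicW by simp
  next
    case empty show ?case using apx_zero[OF nf] by simp
  next
    case (compl A)
    have AM: "A \<in> sets M" using sM[OF compl(1)] .
    have eq: "indicator ((UNIV - A) \<inter> W) = (\<lambda>x. indicator W x + (-1) * indicator (A \<inter> W) x :: real)"
      by (auto simp: indicator_def)
    show ?case unfolding eq
    proof (rule apx_add[OF nf M])
      show "indicator W \<in> borel_measurable M" using WM by simp
      show "(\<lambda>x. (-1) * indicator (A \<inter> W) x :: real) \<in> borel_measurable M" using WM AM by simp
      show "apx M \<Phi> (indicator W)" using basicW[of UNIV] by simp
      show "apx M \<Phi> (\<lambda>x. (-1) * indicator (A \<inter> W) x)" by (rule apx_scale[OF nf compl(2)])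
    qed
  next
    case (union A)
    have AM: "A i \<in> sets M" for i using union(2) sM by auto
    define hn where "hn = (\<lambda>n x. \<Sum>i<n. indicator (A i \<inter> W) x :: real)"
    have hn_eq: "hn n x = indicator (\<Union>i<n. A i \<inter> W) x" for n x
    proof -
      have "disjoint_family_on (\<lambda>i. A i \<inter> W) {..<n}"
        using union(1) unfolding disjoint_family_on_def by auto
      then show ?thesis unfolding hn_def by (subst indicator_UN_disjoint[OF finite_lessThan]) auto
    qed
    have hnm: "hn n \<in> borel_measurable M" for n unfolding hn_def using AM WM by measurable
    have hna: "apx M \<Phi> (hn n)" for n
    proof (induction n)
      case 0 then show ?case using apx_zero[OF nf] by (simp add: hn_def)
    next
      case (Suc n)
      have "hn (Suc n) = (\<lambda>x. hn n x + indicator (A n \<inter> W) x)" by (auto simp: hn_def)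
      then show ?case using apx_add[OF nf M hnm _ Suc union(3)[of n]] AM WM by simp
    qed
    have UA: "(\<Union>i. A i \<inter> W) = (\<Union>(range A)) \<inter> W" by auto
    have UM: "(\<Union>(range A)) \<inter> W \<in> sets M" using AM WM by auto
    have UMi: "indicator (\<Union>(range A) \<inter> W) \<in> borel_measurable M" using borel_measurable_indicator[OF UM] .
    show ?case
    proof (rule apx_lim[OF nf M UMi hnm hna])
      fix c :: real assume c: "0 < c"
      show "(\<lambda>n. modu M \<Phi> (\<lambda>x. indicator (\<Union>(range A) \<inter> W) x - hn n x) c) \<longlonglongrightarrow> 0"
      proof (rule modu_dconv[OF nf c UMi hnm, where w = "\<lambda>x. \<Phi> (1/c) * indicator W x"])
        show "(\<lambda>x. \<Phi> (1/c) * indicator W x) \<in> borel_measurable M" using WM by simp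
        show "\<Phi> (\<bar>indicator (\<Union>(range A) \<inter> W) x - hn n x\<bar> / c) \<le> \<Phi> (1/c) * indicator W x" for n x
        proof (rule ind_bound[OF nf c])
          show "x \<notin> W \<Longrightarrow> indicator (\<Union>(range A) \<inter> W) x - hn n x = 0"
            unfolding hn_eq by (simp add: indicator_def)
          show "\<bar>indicator (\<Union>(range A) \<inter> W) x - hn n x\<bar> \<le> 1" unfolding hn_eq by (rule ind_diff_le)
        qed
        show "(\<integral>\<^sup>+ x. ennreal (\<Phi> (1/c) * indicator W x) \<partial>M) < \<infinity>"
          by (rule nn_ind_fin[OF WM W(2) nf_nonneg[OF nf]])
        show "(\<lambda>n. hn n x) \<longlonglongrightarrow> indicator (\<Union>(range A) \<inter> W) x" for x
          unfolding hn_eq UA[symmetric] by (rule LIMSEQ_indicator_UN)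
      qed
    qed
  qed
qed

lemma apx_fin:
  fixes M :: "'a::{t2_space, second_countable_topology} measure"
  assumes nf: "N_function \<Phi>" and M: "radon_measure M"
    and lc: "locally_compact_space (euclidean :: 'a topology)"
    and B: "B \<in> sets M" and fin: "emeasure M B < \<infinity>"
  shows "apx M \<Phi> (indicator B)"
proof -
  obtain V K where VK: "\<forall>i::nat. open (V i) \<and> compact (K i) \<and> V i \<subseteq> K i \<and> K i \<subseteq> (UNIV :: 'a set)" "(\<Union>i. V i) = (UNIV :: 'a set)"
    using open_sigma_compact[OF lc open_UNIV] by blast
  define Wn where "Wn = (\<lambda>n. \<Union>i<n. V i)"
  have Wo: "open (Wn n)" for n unfolding Wn_def using VK by auto
  have WM: "Wn n \<in> sets M" for n using rm_sets[OF M] Wo by simp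
  have Wf: "emeasure M (Wn n) < \<infinity>" for n
  proof -
    have "Wn n \<subseteq> (\<Union>i<n. K i)" unfolding Wn_def using VK by blast
    moreover have "compact (\<Union>i<n. K i)" using VK by (intro compact_UN) auto
    ultimately have "emeasure M (Wn n) \<le> emeasure M (\<Union>i<n. K i)"
      by (intro emeasure_mono) (auto simp: rm_sets[OF M] compact_imp_closed)
    then show ?thesis using rm_finite[OF M \<open>compact (\<Union>i<n. K i)\<close>] by auto
  qed
  have BB: "B \<in> sets borel" using B rm_sets[OF M] by simp
  show ?thesis
  proof (rule apx_lim[OF nf M _ _ apx_borel_W[OF nf M lc Wo Wf BB]])
    show "indicator B \<in> borel_measurable M" using B by simp
    show "indicator (B \<inter> Wn n) \<in> borel_measurable M" for n using B WM by measurable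
    fix c :: real assume c: "0 < c"
    show "(\<lambda>n. modu M \<Phi> (\<lambda>x. indicator B x - indicator (B \<inter> Wn n) x) c) \<longlonglongrightarrow> 0"
    proof (rule modu_dconv[OF nf c, where w = "\<lambda>x. \<Phi> (1/c) * indicator B x"])
      show "indicator B \<in> borel_measurable M" using B by simp
      show "indicator (B \<inter> Wn n) \<in> borel_measurable M" for n using B WM by measurable
      show "(\<lambda>x. \<Phi> (1/c) * indicator B x) \<in> borel_measurable M" using B by simp
      show "\<Phi> (\<bar>indicator B x - indicator (B \<inter> Wn n) x\<bar> / c) \<le> \<Phi> (1/c) * indicator B x" for n x
        by (rule ind_bound[OF nf c]) (auto simp: indicator_def)
      show "(\<integral>\<^sup>+ x. ennreal (\<Phi> (1/c) * indicator B x) \<partial>M) < \<infinity>"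
        by (rule nn_ind_fin[OF B fin nf_nonneg[OF nf]])
      fix x
      obtain i where "x \<in> V i" using VK(2) by blast
      then have "\<forall>n\<ge>Suc i. indicator (B \<inter> Wn n) x = (indicator B x :: real)"
        unfolding Wn_def by (auto simp: indicator_def)
      then show "(\<lambda>n. indicator (B \<inter> Wn n) x :: real) \<longlonglongrightarrow> indicator B x"
        by (intro tendsto_eventually) (auto simp: eventually_sequentially)
    qed
  qed
qed



lemma apx_sum:
  assumes nf: "N_function \<Phi>" and M: "radon_measure M"
  shows "finite S \<Longrightarrow> (\<And>y. y \<in> S \<Longrightarrow> apx M \<Phi> (g y) \<and> g y \<in> borel_measurable M) \<Longrightarrow>
     apx M \<Phi> (\<lambda>x. \<Sum>y\<in>S. g y x)"
proof (induction S rule: finite_induct)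
  case empty then show ?case using apx_zero[OF nf] by simp
next
  case (insert z S)
  have m: "(\<lambda>x. \<Sum>y\<in>S. g y x) \<in> borel_measurable M" using insert by (intro borel_measurable_sum) auto
  have "apx M \<Phi> (\<lambda>x. g z x + (\<Sum>y\<in>S. g y x))"
    using insert by (intro apx_add[OF nf M _ m]) auto
  then show ?case using insert by simp
qed

lemma apx_meas:
  fixes M :: "'a::{t2_space, second_countable_topology} measure"
  assumes nf: "N_function \<Phi>" and M: "radon_measure M"
    and lc: "locally_compact_space (euclidean :: 'a topology)"
    and hm: "h \<in> borel_measurable M" and fin: "\<And>c. 0 < c \<Longrightarrow> modu M \<Phi> h c < \<infinity>"
  shows "apx M \<Phi> h"
proof -
  have sp: "space M = UNIV" by (rule rm_space[OF M])
  obtain F where F: "\<And>i. simple_function M (F i)" "\<And>x. (\<lambda>i. F i x) \<longlonglongrightarrow> h x"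
    "\<And>i x. dist (F i x) 0 \<le> 2 * dist (h x) 0"
    using borel_measurable_implies_sequence_metric[OF hm, of 0] sp by auto
  have Fb: "\<bar>F i x\<bar> \<le> 2 * \<bar>h x\<bar>" for i x using F(3)[of i x] by simp
  have Fm: "F i \<in> borel_measurable M" for i using F(1) by (rule borel_measurable_simple_function)
  have [measurable]: "\<Phi> \<in> borel_measurable borel" by (rule nf_meas[OF nf])
  have Fa: "apx M \<Phi> (F i)" for i
  proof -
    define S where "S = F i ` space M"
    define B where "B = (\<lambda>y. F i -` {y} \<inter> space M)"
    have S: "finite S" using simple_functionD(1)[OF F(1)] S_def by simp
    have BM: "B y \<in> sets M" for y unfolding B_def by (rule simple_functionD(2)[OF F(1)])
    have Beq: "F i x = (\<Sum>y\<in>S. y * indicator (B y) x)" for x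
    proof -
      have "(\<Sum>y\<in>S. y * indicator (B y) x) = (\<Sum>y\<in>S. if y = F i x then F i x else 0)"
        by (rule sum.cong) (auto simp: B_def indicator_def sp)
      also have "\<dots> = F i x" using S by (simp add: S_def sp)
      finally show ?thesis by simp
    qed
    have Bfin: "emeasure M (B y) < \<infinity>" if y: "y \<noteq> 0" for y
    proof -
      have pos: "0 < \<Phi> (\<bar>y\<bar> / 2)" using nf_pos[OF nf] y by simp
      have "(\<integral>\<^sup>+x. ennreal (\<Phi> (\<bar>y\<bar> / 2)) * indicator (B y) x \<partial>M) \<le> (\<integral>\<^sup>+x. ennreal (\<Phi> (\<bar>h x\<bar> / 1)) \<partial>M)"
      proof (rule nn_integral_mono)
        fix x
        show "ennreal (\<Phi> (\<bar>y\<bar> / 2)) * indicator (B y) x \<le> ennreal (\<Phi> (\<bar>h x\<bar> / 1))"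
        proof (cases "x \<in> B y")
          case True
          then have "F i x = y" by (simp add: B_def)
          then have "\<bar>y\<bar> / 2 \<le> \<bar>h x\<bar> / 1" using Fb[of i x] by simp
          then have "\<Phi> (\<bar>y\<bar> / 2) \<le> \<Phi> (\<bar>h x\<bar> / 1)" by (intro nf_mono[OF nf]) auto
          then show ?thesis using True by (simp add: ennreal_leI)
        qed simp
      qed
      also have "\<dots> < \<infinity>" using fin[of 1] by (simp add: modu_def)
      finally have "ennreal (\<Phi> (\<bar>y\<bar> / 2)) * emeasure M (B y) < \<infinity>"
        using nn_integral_cmult_indicator[OF BM[of y]] by simp
      then show ?thesis using pos by (cases "emeasure M (B y) = 0") (auto simp: ennreal_mult_less_top)
    qed
    have "apx M \<Phi> (\<lambda>x. \<Sum>y\<in>S. y * indicator (B y) x)"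
    proof (rule apx_sum[OF nf M S])
      fix y assume "y \<in> S"
      show "apx M \<Phi> (\<lambda>x. y * indicator (B y) x) \<and> (\<lambda>x. y * indicator (B y) x) \<in> borel_measurable M"
        using apx_scale[OF nf apx_fin[OF nf M lc BM Bfin]] BM by simp
    qed
    then show ?thesis using Beq by presburger
  qed
  show ?thesis
  proof (rule apx_lim[OF nf M hm Fm Fa])
    fix c :: real assume c: "0 < c"
    show "(\<lambda>n. modu M \<Phi> (\<lambda>x. h x - F n x) c) \<longlonglongrightarrow> 0"
    proof (rule modu_dconv[OF nf c hm Fm, where w = "\<lambda>x. \<Phi> (\<bar>h x\<bar> / (c/3))"])
      show "(\<lambda>x. \<Phi> (\<bar>h x\<bar> / (c/3))) \<in> borel_measurable M" using hm by measurable
      show "\<Phi> (\<bar>h x - F n x\<bar> / c) \<le> \<Phi> (\<bar>h x\<bar> / (c/3))" for n x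
      proof (rule nf_mono[OF nf])
        show "0 \<le> \<bar>h x - F n x\<bar> / c" using c by simp
        have "\<bar>h x - F n x\<bar> \<le> 3 * \<bar>h x\<bar>" using Fb[of n x] by linarith
        then have "\<bar>h x - F n x\<bar> / c \<le> (3 * \<bar>h x\<bar>) / c" using c by (simp add: divide_right_mono)
        also have "\<dots> = \<bar>h x\<bar> / (c/3)" by simp
        finally show "\<bar>h x - F n x\<bar> / c \<le> \<bar>h x\<bar> / (c/3)" .
      qed
      show "(\<integral>\<^sup>+ x. ennreal (\<Phi> (\<bar>h x\<bar> / (c/3))) \<partial>M) < \<infinity>" using fin[of "c/3"] c by (simp add: modu_def)
      show "(\<lambda>n. F n x) \<longlonglongrightarrow> h x" for x by (rule F(2))
    qed
  qed
qed

lemma delta2_iter: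
  fixes C :: real
  assumes nf: "N_function \<Phi>" and K: "1 \<le> K" and C: "0 \<le> C"
    and d: "\<And>x. 0 \<le> x \<Longrightarrow> \<Phi> (2 * x) \<le> K * \<Phi> x + C" and x: "0 \<le> x"
  shows "\<Phi> (2^m * x) \<le> K^m * (\<Phi> x + real m * C)"
proof (induction m)
  case 0 then show ?case by simp
next
  case (Suc m)
  have "\<Phi> (2^Suc m * x) = \<Phi> (2 * (2^m * x))" by (simp add: mult.assoc)
  also have "\<dots> \<le> K * \<Phi> (2^m * x) + C" using d x by simp
  also have "\<dots> \<le> K * (K^m * (\<Phi> x + real m * C)) + C" using Suc K by (intro add_right_mono mult_left_mono) auto
  also have "\<dots> \<le> K^Suc m * (\<Phi> x + real (Suc m) * C)"
  proof -
    have "1 \<le> K^Suc m" by (rule one_le_power[OF K])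
    then have "C \<le> K^Suc m * C" using C by (simp add: mult_le_cancel_right1)
    then show ?thesis by (simp add: algebra_simps)
  qed
  finally show ?case .
qed

lemma delta2_finite:
  fixes M :: "'a::{t2_space} measure"
  assumes nf: "N_function \<Phi>" and M: "radon_measure M"
    and D: "Delta2 (compact (UNIV :: 'a set)) \<Phi>" and h: "h \<in> orlicz_space M \<Phi>" and c: "0 < c"
  shows "modu M \<Phi> h c < \<infinity>"
proof -
  have [measurable]: "\<Phi> \<in> borel_measurable borel" by (rule nf_meas[OF nf])
  obtain K C where KC: "1 \<le> K" "0 \<le> C" "\<And>x. 0 \<le> x \<Longrightarrow> \<Phi> (2 * x) \<le> K * \<Phi> x + C"
    and CM: "C = 0 \<or> emeasure M UNIV < \<infinity>"
  proof (cases "compact (UNIV :: 'a set)")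
    case True
    then obtain k x0 where k: "k > 0" "x0 > 0" "\<And>x. x \<ge> x0 \<Longrightarrow> \<Phi> (2 * x) \<le> k * \<Phi> x"
      using D by (auto simp: Delta2_def)
    show ?thesis
    proof (rule that[of "max k 1" "\<Phi> (2 * x0)"])
      show "0 \<le> \<Phi> (2 * x0)" by (rule nf_nonneg[OF nf])
      show "\<Phi> (2 * x0) = 0 \<or> emeasure M UNIV < \<infinity>" using rm_finite[OF M True] by simp
      fix x :: real assume x: "0 \<le> x"
      show "\<Phi> (2 * x) \<le> max k 1 * \<Phi> x + \<Phi> (2 * x0)"
      proof (cases "x \<ge> x0")
        case True
        then have "\<Phi> (2 * x) \<le> k * \<Phi> x" by (rule k(3))
        also have "\<dots> \<le> max k 1 * \<Phi> x" using nf_nonneg[OF nf] by (intro mult_right_mono) auto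
        finally show ?thesis using nf_nonneg[OF nf, of "2 * x0"] by linarith
      next
        case False
        then have "\<Phi> (2 * x) \<le> \<Phi> (2 * x0)" using x by (intro nf_mono[OF nf]) auto
        moreover have "0 \<le> max k 1 * \<Phi> x" using nf_nonneg[OF nf] by simp
        ultimately show ?thesis by linarith
      qed
    qed auto
  next
    case False
    then obtain k where k: "k > 0" "\<And>x. x \<ge> 0 \<Longrightarrow> \<Phi> (2 * x) \<le> k * \<Phi> x"
      using D by (auto simp: Delta2_def)
    show ?thesis
    proof (rule that[of "max k 1" 0])
      fix x :: real assume x: "0 \<le> x"
      have "\<Phi> (2 * x) \<le> k * \<Phi> x" by (rule k(2)[OF x])
      also have "\<dots> \<le> max k 1 * \<Phi> x" using nf_nonneg[OF nf] by (intro mult_right_mono) auto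
      finally show "\<Phi> (2 * x) \<le> max k 1 * \<Phi> x + 0" by simp
    qed auto
  qed
  from h obtain \<alpha> where hm[measurable]: "h \<in> borel_measurable M" and a: "\<alpha> > 0"
    and I: "(\<integral>\<^sup>+ x. ennreal (\<Phi> (\<alpha> * \<bar>h x\<bar>)) \<partial>M) < \<infinity>"
    by (auto simp: orlicz_space_def)
  obtain m :: nat where m: "1 / (c * \<alpha>) < 2^m" using real_arch_pow[of 2 "1 / (c * \<alpha>)"] by auto
  have bnd: "\<Phi> (\<bar>h x\<bar> / c) \<le> K^m * (\<Phi> (\<alpha> * \<bar>h x\<bar>) + real m * C)" for x
  proof -
    have "1 / c \<le> 2^m * \<alpha>" using m a c by (simp add: field_simps)
    then have "\<bar>h x\<bar> / c \<le> 2^m * (\<alpha> * \<bar>h x\<bar>)"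
      using mult_right_mono[of "1/c" "2^m * \<alpha>" "\<bar>h x\<bar>"] by (simp add: mult.assoc)
    then have "\<Phi> (\<bar>h x\<bar> / c) \<le> \<Phi> (2^m * (\<alpha> * \<bar>h x\<bar>))" using c by (intro nf_mono[OF nf]) auto
    also have "\<dots> \<le> K^m * (\<Phi> (\<alpha> * \<bar>h x\<bar>) + real m * C)"
      by (rule delta2_iter[OF nf KC]) (use a in auto)
    finally show ?thesis .
  qed
  have "modu M \<Phi> h c \<le> (\<integral>\<^sup>+ x. ennreal (K^m) * (ennreal (\<Phi> (\<alpha> * \<bar>h x\<bar>)) + ennreal (real m * C)) \<partial>M)"
    unfolding modu_def
  proof (rule nn_integral_mono)
    fix x
    have "ennreal (\<Phi> (\<bar>h x\<bar> / c)) \<le> ennreal (K^m * (\<Phi> (\<alpha> * \<bar>h x\<bar>) + real m * C))"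
      using bnd by (rule ennreal_leI)
    also have "\<dots> = ennreal (K^m) * (ennreal (\<Phi> (\<alpha> * \<bar>h x\<bar>)) + ennreal (real m * C))"
      using KC nf_nonneg[OF nf] by (simp add: ennreal_mult ennreal_plus)
    finally show "ennreal (\<Phi> (\<bar>h x\<bar> / c)) \<le> ennreal (K^m) * (ennreal (\<Phi> (\<alpha> * \<bar>h x\<bar>)) + ennreal (real m * C))" .
  qed
  also have "\<dots> = ennreal (K^m) * ((\<integral>\<^sup>+ x. ennreal (\<Phi> (\<alpha> * \<bar>h x\<bar>)) \<partial>M) + ennreal (real m * C) * emeasure M (space M))"
    by (simp add: nn_integral_cmult nn_integral_add)
  also have "\<dots> < \<infinity>"
  proof -
    have "ennreal (real m * C) * emeasure M (space M) < \<infinity>"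
      using CM rm_space[OF M] by (auto simp: ennreal_mult_less_top)
    then show ?thesis using I by (simp add: ennreal_mult_less_top)
  qed
  finally show ?thesis .
qed

theorem density:
  fixes M :: "'a::{t2_space, second_countable_topology} measure"
  assumes nf: "N_function \<Phi>" and M: "radon_measure M"
    and lc: "locally_compact_space (euclidean :: 'a topology)"
    and D: "Delta2 (compact (UNIV :: 'a set)) \<Phi>" and h: "h \<in> orlicz_space M \<Phi>" and e: "0 < \<epsilon>"
  shows "\<exists>f\<in>Cc. gauge_norm M \<Phi> (\<lambda>x. h x - f x) < \<epsilon>"
proof -
  have hm: "h \<in> borel_measurable M" using h by (simp add: orlicz_space_def)
  have "apx M \<Phi> h" by (rule apx_meas[OF nf M lc hm delta2_finite[OF nf M D h]])
  then obtain f where f: "f \<in> Cc" "modu M \<Phi> (\<lambda>x. h x - f x) (\<epsilon>/2) \<le> ennreal 1"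
    unfolding apx_def using e by (meson half_gt_zero zero_less_one)
  then have "gauge_norm M \<Phi> (\<lambda>x. h x - f x) \<le> \<epsilon>/2" using e by (intro gauge_le) auto
  then show ?thesis using f e by (intro bexI[of _ f]) auto
qed



definition psi :: "(nat \<Rightarrow> 'a \<Rightarrow> real) \<Rightarrow> nat \<Rightarrow> 'a \<Rightarrow> real" where
  "psi \<phi> n x = (if n = 0 then 1 else \<phi> (n - 1) x) - \<phi> n x"

lemma psi_tel: "(\<Sum>n\<le>N. psi \<phi> n x) = 1 - \<phi> N x"
  by (induction N) (auto simp: psi_def)

lemma psi_zero_tail: "(\<And>n. N \<le> n \<Longrightarrow> \<phi> n x = 0) \<Longrightarrow> N < n \<Longrightarrow> psi \<phi> n x = 0"
  by (auto simp: psi_def)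

lemma psi_sum_ext:
  assumes "\<And>n. N \<le> n \<Longrightarrow> \<phi> n x = 0" "N \<le> M"
  shows "(\<Sum>n\<le>M. psi \<phi> n x * a n) = (\<Sum>n\<le>N. psi \<phi> n x * a n)"
  using assms(2)
proof (induction M rule: dec_induct)
  case base then show ?case by simp
next
  case (step m)
  have "psi \<phi> (Suc m) x = 0" using assms(1) step by (auto simp: psi_def)
  then show ?case using step by simp
qed

lemma psi_sum1:
  assumes "\<And>n. N \<le> n \<Longrightarrow> \<phi> n x = 0"
  shows "(\<Sum>n\<le>N. psi \<phi> n x) = 1"
  using psi_tel[where N=N and \<phi>=\<phi> and x=x] assms by simp

lemma psi_nonneg:
  assumes "\<And>n x. \<phi> (Suc n) x \<le> \<phi> n x" "\<And>x. \<phi> 0 x \<le> 1"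
  shows "0 \<le> psi \<phi> n x"
  using assms by (cases n) (auto simp: psi_def)

lemma gauge_lincomb:
  assumes nf: "N_function \<Phi>" and S: "finite S" and adm: "\<And>n. n \<in> S \<Longrightarrow> adm M \<Phi> (h n)"
    and c: "\<And>n. n \<in> S \<Longrightarrow> 0 \<le> c n"
  shows "gauge_norm M \<Phi> (\<lambda>x. \<Sum>n\<in>S. c n * h n x) \<le> (\<Sum>n\<in>S. c n * gauge_norm M \<Phi> (h n))"
proof -
  have "gauge_norm M \<Phi> (\<lambda>x. \<Sum>n\<in>S. c n * h n x) \<le> (\<Sum>n\<in>S. gauge_norm M \<Phi> (\<lambda>x. c n * h n x))"
    using gauge_sum[OF nf S, where h="\<lambda>n x. c n * h n x" and M=M] adm_scale[OF nf adm] by simp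
  also have "\<dots> \<le> (\<Sum>n\<in>S. c n * gauge_norm M \<Phi> (h n))"
  proof (rule sum_mono)
    fix n assume n: "n \<in> S"
    show "gauge_norm M \<Phi> (\<lambda>x. c n * h n x) \<le> c n * gauge_norm M \<Phi> (h n)"
      using gauge_scale[OF nf adm[OF n], of "c n"] c[OF n] by simp
  qed
  finally show ?thesis .
qed

lemma gauge_convex_bound:
  assumes nf: "N_function \<Phi>" and S: "finite S" and adm: "\<And>n. n \<in> S \<Longrightarrow> adm M \<Phi> (h n)"
    and c: "\<And>n. n \<in> S \<Longrightarrow> 0 \<le> c n" and c1: "(\<Sum>n\<in>S. c n) = 1"
    and B: "\<And>n. n \<in> S \<Longrightarrow> c n \<noteq> 0 \<Longrightarrow> gauge_norm M \<Phi> (h n) \<le> B"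
  shows "gauge_norm M \<Phi> (\<lambda>x. \<Sum>n\<in>S. c n * h n x) \<le> B"
proof -
  have "gauge_norm M \<Phi> (\<lambda>x. \<Sum>n\<in>S. c n * h n x) \<le> (\<Sum>n\<in>S. c n * gauge_norm M \<Phi> (h n))"
    by (rule gauge_lincomb[OF nf S adm c])
  also have "\<dots> \<le> (\<Sum>n\<in>S. c n * B)"
  proof (rule sum_mono)
    fix n assume n: "n \<in> S"
    show "c n * gauge_norm M \<Phi> (h n) \<le> c n * B"
      using B[OF n] c[OF n] by (cases "c n = 0") (auto intro: mult_left_mono)
  qed
  also have "\<dots> = B" using c1 by (simp add: sum_distrib_right[symmetric])
  finally show ?thesis .
qed

lemma geom_sum_bound:
  assumes "n0 \<le> n"
  shows "(\<Sum>j=n0..<n. (1/2::real)^j) = 2 * (1/2)^n0 - 2 * (1/2)^n"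
  using assms
proof (induction n rule: dec_induct)
  case base then show ?case by simp
next
  case (step m)
  have "(\<Sum>j=n0..<Suc m. (1/2::real)^j) = (\<Sum>j=n0..<m. (1/2)^j) + (1/2)^m" using step.hyps by simp
  also have "\<dots> = 2*(1/2)^n0 - 2*(1/2)^m + (1/2)^m" using step.IH by simp
  also have "\<dots> = 2*(1/2)^n0 - 2*(1/2)^Suc m" by simp
  finally show ?case .
qed

lemma gauge_telescope:
  assumes nf: "N_function \<Phi>" and adm: "\<And>j. adm M \<Phi> (f j)" and le: "n0 \<le> n"
  shows "gauge_norm M \<Phi> (\<lambda>x. f n x - f n0 x) \<le> (\<Sum>j=n0..<n. gauge_norm M \<Phi> (\<lambda>x. f (Suc j) x - f j x))"
proof -
  have "(\<lambda>x. f n x - f n0 x) = (\<lambda>x. \<Sum>j=n0..<n. f (Suc j) x - f j x)"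
    using sum_Suc_diff'[OF le, of "\<lambda>j. f j x" for x] by (auto intro!: ext simp: sum_Suc_diff'[OF le])
  then show ?thesis
    using gauge_sum[OF nf finite_atLeastLessThan, where M=M and h="\<lambda>j x. f (Suc j) x - f j x"] adm_diff[OF nf adm adm]
    by simp
qed



theorem lemma3p4:
  fixes G2 :: "('g::{t2_space, second_countable_topology} \<times> 'g) set"
    and gm :: "'g \<Rightarrow> 'g \<Rightarrow> 'g" and gi :: "'g \<Rightarrow> 'g"
    and lam :: "'g \<Rightarrow> 'g measure"
    and \<Phi> \<Psi> :: "real \<Rightarrow> real"
    and u :: 'g and g :: "'g \<Rightarrow> real" and k :: real
  assumes "topological_groupoid G2 gm gi"
    and "locally_compact_space (euclidean :: 'g topology)"
    and "left_haar_system G2 gm gi lam"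
    and "N_function \<Phi>"
    and "\<Psi> = complementary_function \<Phi>"
    and "Delta2 (compact (UNIV :: 'g set)) \<Phi>"
    and "u \<in> unit_space gm gi"
    and "g \<in> orlicz_space (lam u) \<Phi>"
    and "gauge_norm (lam u) \<Phi> g \<le> k"
  shows "\<exists>\<eta> \<in> E0 gm gi lam \<Phi>.
           (AE x in lam u. \<eta> u x = g x) \<and> E0_norm gm gi lam \<Phi> \<eta> \<le> k"
proof -
  note tg = assms(1) and lc = assms(2) and lhs = assms(3) and nf = assms(4) and D = assms(6)
    and u = assms(7) and g = assms(8) and gk = assms(9)
  have rad: "\<And>v. v \<in> unit_space gm gi \<Longrightarrow> radon_measure (lam v)" using lhs_radon[OF lhs] by simp
  have radu: "radon_measure (lam u)" using rad u by simp
  have gadm: "adm (lam u) \<Phi> g" by (rule orlicz_adm[OF nf g])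
  have k0: "0 \<le> k" using gauge_nonneg[OF gadm] gk by linarith
  have admCc: "\<And>v f. v \<in> unit_space gm gi \<Longrightarrow> f \<in> Cc \<Longrightarrow> adm (lam v) \<Phi> f"
    using rm_adm[OF nf rad] by blast

  have approx: "\<exists>f. f \<in> Cc \<and> gauge_norm (lam u) \<Phi> (\<lambda>x. g x - f x) < \<epsilon> \<and>
                   (f = (\<lambda>x. 0) \<or> gauge_norm (lam u) \<Phi> f < k)" if e: "0 < \<epsilon>" for \<epsilon>
  proof (cases "gauge_norm (lam u) \<Phi> g < \<epsilon>")
    case True
    then show ?thesis using Cc_zero by (intro exI[of _ "\<lambda>x. 0"]) auto
  next
    case False
    then have kpos: "0 < k" using e gk by linarith
    define \<delta> where "\<delta> = \<epsilon>/3"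
    have d: "0 < \<delta>" using e by (simp add: \<delta>_def)
    obtain f0 where f0: "f0 \<in> Cc" "gauge_norm (lam u) \<Phi> (\<lambda>x. g x - f0 x) < \<delta>"
      using density[OF nf radu lc D g d] by blast
    have f0adm: "adm (lam u) \<Phi> f0" using rm_adm[OF nf radu f0(1)] .
    have dadm: "adm (lam u) \<Phi> (\<lambda>x. g x - f0 x)" using adm_diff[OF nf gadm f0adm] .
    have "gauge_norm (lam u) \<Phi> (\<lambda>x. g x - (g x - f0 x)) \<le> gauge_norm (lam u) \<Phi> g + gauge_norm (lam u) \<Phi> (\<lambda>x. g x - f0 x)"
      by (rule gauge_diff[OF nf gadm dadm])
    then have nf0: "gauge_norm (lam u) \<Phi> f0 < k + \<delta>" using f0(2) gk by simp
    define s where "s = k / (k + 2*\<delta>)"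
    have s: "0 < s" "s < 1" using kpos d by (auto simp: s_def)
    have "gauge_norm (lam u) \<Phi> (\<lambda>x. s * f0 x) \<le> \<bar>s\<bar> * gauge_norm (lam u) \<Phi> f0"
      by (rule gauge_scale[OF nf f0adm])
    also have "\<dots> < s * (k + \<delta>)" using nf0 s by simp
    also have "\<dots> < k"
    proof -
      have "k * (k + \<delta>) < k * (k + 2*\<delta>)" using kpos d by simp
      then show ?thesis using kpos d by (simp add: s_def field_simps)
    qed
    finally have n1: "gauge_norm (lam u) \<Phi> (\<lambda>x. s * f0 x) < k" .
    have eq: "(\<lambda>x. g x - s * f0 x) = (\<lambda>x. (g x - f0 x) + (1 - s) * f0 x)" by (auto simp: algebra_simps)
    have "gauge_norm (lam u) \<Phi> (\<lambda>x. g x - s * f0 x) \<le>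
        gauge_norm (lam u) \<Phi> (\<lambda>x. g x - f0 x) + gauge_norm (lam u) \<Phi> (\<lambda>x. (1 - s) * f0 x)"
      unfolding eq by (rule gauge_add[OF nf dadm adm_scale[OF nf f0adm]])
    also have "\<dots> \<le> gauge_norm (lam u) \<Phi> (\<lambda>x. g x - f0 x) + \<bar>1 - s\<bar> * gauge_norm (lam u) \<Phi> f0"
      using gauge_scale[OF nf f0adm, of "1 - s"] by simp
    also have "\<dots> < \<delta> + (1 - s) * (k + \<delta>)"
      using f0(2) nf0 s by (intro add_strict_mono) auto
    also have "\<dots> \<le> \<epsilon>"
    proof -
      have "(1 - s) * (k + \<delta>) = 2 * \<delta> * ((k + \<delta>) / (k + 2*\<delta>))" using kpos d by (simp add: s_def field_simps)
      also have "\<dots> \<le> 2 * \<delta> * 1" using kpos d by (intro mult_left_mono) auto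
      finally show ?thesis by (simp add: \<delta>_def)
    qed
    finally show ?thesis using n1 Cc_scale[OF f0(1), of s] by (intro exI[of _ "\<lambda>x. s * f0 x"]) auto
  qed
  define P where "P = (\<lambda>n f. f \<in> Cc \<and> gauge_norm (lam u) \<Phi> (\<lambda>x. g x - f x) < (1/2)^(n+2) \<and>
                   (f = (\<lambda>x. 0) \<or> gauge_norm (lam u) \<Phi> f < k))"
  define fs where "fs = (\<lambda>n. if n = 0 then (\<lambda>x. 0) else (SOME f. P n f))"
  have fs0: "fs 0 = (\<lambda>x. 0)" by (simp add: fs_def)
  have fsP: "P n (fs n)" if "1 \<le> n" for n
  proof -
    have "\<exists>f. P n f" unfolding P_def by (rule approx) simp
    then show ?thesis using that unfolding fs_def by (simp add: someI_ex)
  qed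
  have fsCc: "fs n \<in> Cc" for n using fsP[of n] Cc_zero by (cases "n = 0") (auto simp: P_def fs0)
  have fsk: "fs n = (\<lambda>x. 0) \<or> gauge_norm (lam u) \<Phi> (fs n) < k" for n
    using fsP[of n] by (cases "n = 0") (auto simp: P_def fs0)
  have fsg: "gauge_norm (lam u) \<Phi> (\<lambda>x. g x - fs n x) < (1/2)^(n+2)" if "1 \<le> n" for n
    using fsP[OF that] by (simp add: P_def)
  have fsadm: "\<And>v n. v \<in> unit_space gm gi \<Longrightarrow> adm (lam v) \<Phi> (fs n)" using admCc fsCc by blast

  have Oex: "\<exists>Ob. open Ob \<and> u \<in> Ob \<and> (\<forall>v\<in>Ob \<inter> unit_space gm gi. gauge_norm (lam v) \<Phi> (fs (Suc n)) \<le> k \<and>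
      (1 \<le> n \<longrightarrow> gauge_norm (lam v) \<Phi> (\<lambda>x. fs (Suc n) x - fs n x) < (1/2)^n))" for n
  proof -
    obtain V1 where V1: "open V1" "u \<in> V1" "\<forall>v\<in>V1 \<inter> unit_space gm gi. gauge_norm (lam v) \<Phi> (fs (Suc n)) \<le> k"
    proof (cases "fs (Suc n) = (\<lambda>x. 0)")
      case True then show ?thesis using that[of UNIV] k0 by (simp add: gauge_zero[OF nf])
    next
      case False
      then have "gauge_norm (lam u) \<Phi> (fs (Suc n)) < k" using fsk by blast
      from gauge_usc[OF lhs nf fsCc u this] obtain V where "open V" "u \<in> V"
        "\<forall>v\<in>V \<inter> unit_space gm gi. gauge_norm (lam v) \<Phi> (fs (Suc n)) < k" by blast
      then show ?thesis using that[of V] by (meson less_imp_le)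
    qed
    obtain V2 where V2: "open V2" "u \<in> V2"
      "\<forall>v\<in>V2 \<inter> unit_space gm gi. 1 \<le> n \<longrightarrow> gauge_norm (lam v) \<Phi> (\<lambda>x. fs (Suc n) x - fs n x) < (1/2)^n"
    proof (cases "n = 0")
      case True then show ?thesis using that[of UNIV] by simp
    next
      case False
      have a1: "adm (lam u) \<Phi> (\<lambda>x. g x - fs n x)" using adm_diff[OF nf gadm fsadm[OF u]] .
      have a2: "adm (lam u) \<Phi> (\<lambda>x. g x - fs (Suc n) x)" using adm_diff[OF nf gadm fsadm[OF u]] .
      have eq: "(\<lambda>x. fs (Suc n) x - fs n x) = (\<lambda>x. (g x - fs n x) - (g x - fs (Suc n) x))" by auto
      have "gauge_norm (lam u) \<Phi> (\<lambda>x. fs (Suc n) x - fs n x) \<le>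
          gauge_norm (lam u) \<Phi> (\<lambda>x. g x - fs n x) + gauge_norm (lam u) \<Phi> (\<lambda>x. g x - fs (Suc n) x)"
        unfolding eq by (rule gauge_diff[OF nf a1 a2])
      also have "\<dots> < (1/2)^(n+2) + (1/2)^(Suc n + 2)"
        using fsg[of n] fsg[of "Suc n"] False by (intro add_strict_mono) auto
      also have "\<dots> \<le> (1/2)^n" by (simp add: power_add)
      finally have "gauge_norm (lam u) \<Phi> (\<lambda>x. fs (Suc n) x - fs n x) < (1/2)^n" .
      from gauge_usc[OF lhs nf Cc_diff[OF fsCc fsCc] u this] obtain V where "open V" "u \<in> V"
        "\<forall>v\<in>V \<inter> unit_space gm gi. gauge_norm (lam v) \<Phi> (\<lambda>x. fs (Suc n) x - fs n x) < (1/2)^n" by blast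
      then show ?thesis using that[of V] by blast
    qed
    show ?thesis using V1 V2 by (intro exI[of _ "V1 \<inter> V2"]) auto
  qed
  have "\<forall>n. \<exists>Ob. open Ob \<and> u \<in> Ob \<and> (\<forall>v\<in>Ob \<inter> unit_space gm gi. gauge_norm (lam v) \<Phi> (fs (Suc n)) \<le> k \<and>
      (1 \<le> n \<longrightarrow> gauge_norm (lam v) \<Phi> (\<lambda>x. fs (Suc n) x - fs n x) < (1/2)^n))" using Oex by blast
  from choice[OF this] obtain Ob where Oall: "\<forall>n. open (Ob n) \<and> u \<in> Ob n \<and> (\<forall>v\<in>Ob n \<inter> unit_space gm gi. gauge_norm (lam v) \<Phi> (fs (Suc n)) \<le> k \<and>
      (1 \<le> n \<longrightarrow> gauge_norm (lam v) \<Phi> (\<lambda>x. fs (Suc n) x - fs n x) < (1/2)^n))" by (elim exE)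
  have Oo: "open (Ob n)" and Ou: "u \<in> Ob n" for n using Oall by auto
  have Ok: "\<And>n v. v \<in> Ob n \<Longrightarrow> v \<in> unit_space gm gi \<Longrightarrow> gauge_norm (lam v) \<Phi> (fs (Suc n)) \<le> k"
    using Oall by blast
  have Od: "\<And>n v. v \<in> Ob n \<Longrightarrow> v \<in> unit_space gm gi \<Longrightarrow> 1 \<le> n \<Longrightarrow> gauge_norm (lam v) \<Phi> (\<lambda>x. fs (Suc n) x - fs n x) < (1/2)^n"
    using Oall by blast

  obtain A where A: "\<And>i. open (A i)" "\<And>i. u \<in> A i" "\<And>S. open S \<Longrightarrow> u \<in> S \<Longrightarrow> eventually (\<lambda>i. A i \<subseteq> S) sequentially"
    using countable_basis_at_decseq[of u] by blast
  define st where "st = (\<lambda>Pset. SOME W. open W \<and> u \<in> W \<and> compact (closure W) \<and> closure W \<subseteq> Pset)"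
  have st: "open (st Pset) \<and> u \<in> st Pset \<and> compact (closure (st Pset)) \<and> closure (st Pset) \<subseteq> Pset"
    if "open Pset" "u \<in> Pset" for Pset
  proof -
    have "\<exists>W. open W \<and> u \<in> W \<and> compact (closure W) \<and> closure W \<subseteq> Pset" by (rule lc_nbhd[OF lc that])
    then show ?thesis unfolding st_def by (rule someI_ex)
  qed
  define W where "W = rec_nat (st (Ob 0)) (\<lambda>n Wn. st (Wn \<inter> Ob (Suc n) \<inter> A n))"
  have W0: "W 0 = st (Ob 0)" and WS: "\<And>n. W (Suc n) = st (W n \<inter> Ob (Suc n) \<inter> A n)" by (simp_all add: W_def)
  have Wou: "open (W n) \<and> u \<in> W n" for n
  proof (induction n)
    case 0 then show ?case using st[OF Oo Ou] W0 by simp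
  next
    case (Suc n)
    have "open (W n \<inter> Ob (Suc n) \<inter> A n)" using Suc by (intro open_Int Oo A(1)) auto
    have uu: "u \<in> W n \<inter> Ob (Suc n) \<inter> A n" using Suc Ou A(2) by auto
    show ?case using st[OF \<open>open (W n \<inter> Ob (Suc n) \<inter> A n)\<close> uu] WS by simp
  qed
  have Wo: "\<And>n. open (W n)" and Wu: "\<And>n. u \<in> W n" using Wou by auto
  have Wc: "compact (closure (W n))" for n
  proof (cases n)
    case 0 then show ?thesis using st[OF Oo Ou] W0 by simp
  next
    case (Suc m)
    have "open (W m \<inter> Ob (Suc m) \<inter> A m)" by (intro open_Int Wo Oo A(1))
    have uu: "u \<in> W m \<inter> Ob (Suc m) \<inter> A m" using Wu Ou A(2) by auto
    show ?thesis using st[OF \<open>open (W m \<inter> Ob (Suc m) \<inter> A m)\<close> uu] Suc WS by simp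
  qed
  have WsubS: "closure (W (Suc n)) \<subseteq> W n \<inter> Ob (Suc n) \<inter> A n" for n
  proof -
    have "open (W n \<inter> Ob (Suc n) \<inter> A n)" by (intro open_Int Wo Oo A(1))
    have uu: "u \<in> W n \<inter> Ob (Suc n) \<inter> A n" using Wu Ou A(2) by auto
    show ?thesis using st[OF \<open>open (W n \<inter> Ob (Suc n) \<inter> A n)\<close> uu] WS by simp
  qed
  have Wsub0: "closure (W 0) \<subseteq> Ob 0" using st[OF Oo Ou] W0 by simp
  have WO: "W n \<subseteq> Ob n" for n
    using Wsub0 WsubS[of "n - 1"] closure_subset[of "W n"] by (cases n) auto
  have WSuc: "W (Suc n) \<subseteq> W n" for n using WsubS[of n] closure_subset[of "W (Suc n)"] by blast
  have Wdec: "m \<le> n \<Longrightarrow> W n \<subseteq> W m" for m n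
  proof (induction n rule: dec_induct)
    case base show ?case by simp
  next
    case (step n) then show ?case using WSuc[of n] by blast
  qed
  have Wcl: "m < n \<Longrightarrow> closure (W n) \<subseteq> W m" for m n
  proof -
    assume mn: "m < n"
    then obtain n' where n': "n = Suc n'" "m \<le> n'" by (cases n) auto
    then show ?thesis using WsubS[of n'] Wdec[of m n'] by blast
  qed
  have sep: "\<exists>Mx N0. open N0 \<and> u0 \<in> N0 \<and> N0 \<inter> W Mx = {}" if ne: "u0 \<noteq> u" for u0
  proof -
    obtain U N0 where UN: "open U" "open N0" "u \<in> U" "u0 \<in> N0" "U \<inter> N0 = {}"
      using hausdorff[OF ne[symmetric]] by blast
    from A(3)[OF UN(1,3)] obtain i where "A i \<subseteq> U" by (auto simp: eventually_sequentially)
    then have "W (Suc i) \<subseteq> U" using WsubS[of i] closure_subset[of "W (Suc i)"] by blast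
    then show ?thesis using UN by (intro exI[of _ "Suc i"] exI[of _ N0]) auto
  qed
  have "\<forall>n. \<exists>\<phi>. \<phi> \<in> Cc \<and> (\<forall>x. 0 \<le> \<phi> x \<and> \<phi> x \<le> 1) \<and> (\<forall>x\<in>closure (W (Suc n)). \<phi> x = 1) \<and> (\<forall>x. x \<notin> W n \<longrightarrow> \<phi> x = 0)"
  proof
    fix n
    have "closure (W (Suc n)) \<subseteq> W n" using WsubS[of n] by blast
    then show "\<exists>\<phi>. \<phi> \<in> Cc \<and> (\<forall>x. 0 \<le> \<phi> x \<and> \<phi> x \<le> 1) \<and> (\<forall>x\<in>closure (W (Suc n)). \<phi> x = 1) \<and> (\<forall>x. x \<notin> W n \<longrightarrow> \<phi> x = 0)"
      using lc_urysohn[OF lc Wc Wo] by simp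
  qed
  from choice[OF this] obtain \<phi> where \<phi>all: "\<forall>n. \<phi> n \<in> Cc \<and> (\<forall>x. 0 \<le> \<phi> n x \<and> \<phi> n x \<le> 1) \<and> (\<forall>x\<in>closure (W (Suc n)). \<phi> n x = 1) \<and> (\<forall>x. x \<notin> W n \<longrightarrow> \<phi> n x = 0)"
    by (elim exE)
  have \<phi>Cc: "\<And>n. \<phi> n \<in> Cc" and \<phi>0: "\<And>n x. 0 \<le> \<phi> n x" and \<phi>1: "\<And>n x. \<phi> n x \<le> 1"
    and \<phi>one: "\<And>n x. x \<in> closure (W (Suc n)) \<Longrightarrow> \<phi> n x = 1"
    and \<phi>zero: "\<And>n x. x \<notin> W n \<Longrightarrow> \<phi> n x = 0"
    using \<phi>all by auto
  have \<phi>mono: "\<phi> (Suc n) x \<le> \<phi> n x" for n x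
  proof (cases "x \<in> W (Suc n)")
    case True
    then have "\<phi> n x = 1" using \<phi>one closure_subset[of "W (Suc n)"] by blast
    then show ?thesis using \<phi>1 by simp
  next
    case False then show ?thesis using \<phi>zero \<phi>0 by simp
  qed
  have \<psi>nn: "0 \<le> psi \<phi> n x" for n x by (rule psi_nonneg[where \<phi>=\<phi>, OF \<phi>mono \<phi>1])
  have \<psi>ne: "x \<in> W (n - 1)" if "psi \<phi> n x \<noteq> 0" "1 \<le> n" for n x
  proof (rule ccontr)
    assume "x \<notin> W (n - 1)"
    then have z: "\<phi> (n - 1) x = 0" by (rule \<phi>zero)
    have "\<phi> n x \<le> \<phi> (n - 1) x" using \<phi>mono[of "n - 1" x] that(2) by simp
    then have "\<phi> n x = 0" using z \<phi>0[of n x] by simp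
    then show False using that z by (simp add: psi_def)
  qed
  have \<psi>low: "psi \<phi> n x = 0" if "x \<in> W n0" "n < n0" for n n0 x
  proof -
    have one: "\<phi> j x = 1" if "j < n0" for j
    proof -
      have "x \<in> W (Suc j)" using Wdec[of "Suc j" n0] \<open>x \<in> W n0\<close> that by auto
      then show ?thesis using \<phi>one closure_subset[of "W (Suc j)"] by blast
    qed
    show ?thesis using one[of n] one[of "n - 1"] that(2) by (cases n) (auto simp: psi_def)
  qed
  have \<psi>cont: "continuous_on UNIV (psi \<phi> n)" for n
  proof -
    have "psi \<phi> n = (\<lambda>x. (if n = 0 then 1 else \<phi> (n - 1) x) - \<phi> n x)" by (auto simp: psi_def)
    moreover have "continuous_on UNIV (\<lambda>x. (if n = 0 then 1 else \<phi> (n - 1) x) - \<phi> n x)"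
      using CcD(1)[OF \<phi>Cc] by (cases "n = 0") (auto intro!: continuous_intros)
    ultimately show ?thesis by simp
  qed

  define Nf where "Nf = (\<lambda>v. LEAST N. v \<notin> W N)"
  have Nf_ex: "\<exists>N. v \<notin> W N" if "v \<noteq> u" for v
    using sep[OF that] by blast
  have Nf_out: "v \<notin> W n" if "v \<noteq> u" "Nf v \<le> n" for v n
  proof -
    have "v \<notin> W (Nf v)" unfolding Nf_def using LeastI_ex[OF Nf_ex[OF that(1)]] .
    then show ?thesis using Wdec[OF that(2)] by blast
  qed
  have Nf_le: "Nf v \<le> M" if "v \<notin> W M" for v M unfolding Nf_def by (rule Least_le) (rule that)
  have \<phi>tail: "\<phi> n v = 0" if "v \<noteq> u" "Nf v \<le> n" for v n using \<phi>zero Nf_out[OF that] by blast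
  define \<eta> where "\<eta> = (\<lambda>v. if v = u then g else (\<lambda>x. \<Sum>n\<le>Nf v. psi \<phi> n v * fs n x))"
  have \<eta>u: "\<eta> u = g" by (simp add: \<eta>_def)
  have \<eta>v: "\<eta> v = (\<lambda>x. \<Sum>n\<le>Nf v. psi \<phi> n v * fs n x)" if "v \<noteq> u" for v using that by (simp add: \<eta>_def)
  have \<eta>Cc: "\<eta> v \<in> Cc" if "v \<noteq> u" for v
    unfolding \<eta>v[OF that] by (intro Cc_sum Cc_scale fsCc) auto
  have \<eta>ext: "\<eta> v x = (\<Sum>n\<le>M. psi \<phi> n v * fs n x)" if "v \<noteq> u" "Nf v \<le> M" for v M x
    unfolding \<eta>v[OF that(1)]
    by (rule psi_sum_ext[where \<phi>=\<phi> and x=v and a="\<lambda>n. fs n x", symmetric, OF \<phi>tail[OF that(1)] that(2)])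
  have \<psi>1: "(\<Sum>n\<le>Nf v. psi \<phi> n v) = 1" if "v \<noteq> u" for v
    by (rule psi_sum1[where \<phi>=\<phi> and x=v, OF \<phi>tail[OF that]])

  have E0a: "\<forall>v\<in>unit_space gm gi. \<eta> v \<in> orlicz_space (lam v) \<Phi>"
  proof
    fix v assume v: "v \<in> unit_space gm gi"
    show "\<eta> v \<in> orlicz_space (lam v) \<Phi>"
    proof (cases "v = u")
      case True then show ?thesis using g \<eta>u by simp
    next
      case False show ?thesis using rm_orlicz[OF nf rad[OF v] \<eta>Cc[OF False]] .
    qed
  qed
  have E0b: "\<forall>u0\<in>unit_space gm gi. \<forall>\<epsilon>>0. \<exists>f\<in>Cc. \<exists>V. open V \<and> u0 \<in> V \<and>
        (\<forall>v\<in>V \<inter> unit_space gm gi. gauge_norm (lam v) \<Phi> (\<lambda>x. \<eta> v x - f x) < \<epsilon>)"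
  proof (intro ballI allI impI)
    fix u0 \<epsilon> assume u0: "u0 \<in> unit_space gm gi" and e: "(0::real) < \<epsilon>"
    show "\<exists>f\<in>Cc. \<exists>V. open V \<and> u0 \<in> V \<and> (\<forall>v\<in>V \<inter> unit_space gm gi. gauge_norm (lam v) \<Phi> (\<lambda>x. \<eta> v x - f x) < \<epsilon>)"
    proof (cases "u0 = u")
      case True
      obtain n0 where n0: "(1/2::real)^n0 < \<epsilon>/2" using real_arch_pow_inv[of "\<epsilon>/2" "1/2"] e by auto
      define n1 where "n1 = Suc n0"
      have p0: "0 \<le> (1/2::real)^n0" by simp
      have e1: "2 * (1/2::real)^n1 = (1/2)^n0" by (simp add: n1_def)
      have e2: "(1/2::real)^(n1+2) = (1/2)^n0 / 8" by (simp add: n1_def power_add)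
      have n1a: "1 \<le> n1" by (simp add: n1_def)
      have n1b: "2 * (1/2::real)^n1 < \<epsilon>" unfolding e1 using n0 p0 by linarith
      have n1c: "(1/2::real)^(n1+2) < \<epsilon>" unfolding e2 using n0 p0 by linarith
      note n1 = n1a n1b n1c
      show ?thesis
      proof (intro bexI exI conjI ballI)
        show "open (W n1)" "u0 \<in> W n1" using Wo Wu True by auto
        show "fs n1 \<in> Cc" by (rule fsCc)
        fix v assume v: "v \<in> W n1 \<inter> unit_space gm gi"
        show "gauge_norm (lam v) \<Phi> (\<lambda>x. \<eta> v x - fs n1 x) < \<epsilon>"
        proof (cases "v = u")
          case True
          then show ?thesis using fsg[OF n1(1)] n1(3) \<eta>u by simp
        next
          case False
          have vG: "v \<in> unit_space gm gi" using v by simp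
          have eq: "(\<lambda>x. \<eta> v x - fs n1 x) = (\<lambda>x. \<Sum>n\<le>Nf v. psi \<phi> n v * (fs n x - fs n1 x))"
          proof
            fix x
            have "(\<Sum>n\<le>Nf v. psi \<phi> n v * (fs n x - fs n1 x)) = (\<Sum>n\<le>Nf v. psi \<phi> n v * fs n x) - (\<Sum>n\<le>Nf v. psi \<phi> n v) * fs n1 x"
              by (simp add: right_diff_distrib sum_subtractf sum_distrib_right)
            then show "\<eta> v x - fs n1 x = (\<Sum>n\<le>Nf v. psi \<phi> n v * (fs n x - fs n1 x))"
              using \<psi>1[OF False] \<eta>v[OF False] by simp
          qed
          have "gauge_norm (lam v) \<Phi> (\<lambda>x. \<Sum>n\<le>Nf v. psi \<phi> n v * (fs n x - fs n1 x)) \<le> 2 * (1/2)^n1"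
          proof (rule gauge_convex_bound[OF nf finite_atMost])
            show "adm (lam v) \<Phi> (\<lambda>x. fs n x - fs n1 x)" for n by (rule adm_diff[OF nf fsadm[OF vG] fsadm[OF vG]])
            show "0 \<le> psi \<phi> n v" for n by (rule \<psi>nn)
            show "(\<Sum>n\<le>Nf v. psi \<phi> n v) = 1" by (rule \<psi>1[OF False])
            fix n assume "n \<in> {..Nf v}" and nz: "psi \<phi> n v \<noteq> 0"
            have vW: "v \<in> W n1" using v by simp
            have "\<not> n < n1" using \<psi>low[OF vW] nz by blast
            then consider "n = n1" | "n1 < n" by linarith
            then show "gauge_norm (lam v) \<Phi> (\<lambda>x. fs n x - fs n1 x) \<le> 2 * (1/2)^n1"
            proof cases
              case 1 then show ?thesis by (simp add: gauge_zero[OF nf])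
            next
              case 2
              have vW': "v \<in> W (n - 1)" using \<psi>ne[OF nz] 2 n1(1) by simp
              have "gauge_norm (lam v) \<Phi> (\<lambda>x. fs n x - fs n1 x) \<le> (\<Sum>j=n1..<n. gauge_norm (lam v) \<Phi> (\<lambda>x. fs (Suc j) x - fs j x))"
                by (rule gauge_telescope[OF nf fsadm[OF vG]]) (use 2 in simp)
              also have "\<dots> \<le> (\<Sum>j=n1..<n. (1/2)^j)"
              proof (rule sum_mono)
                fix j assume j: "j \<in> {n1..<n}"
                have "j \<le> n - 1" using j by auto
                then have "v \<in> W j" using Wdec[of j "n - 1"] vW' by blast
                then have "v \<in> Ob j" using WO by blast
                then show "gauge_norm (lam v) \<Phi> (\<lambda>x. fs (Suc j) x - fs j x) \<le> (1/2)^j"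
                  using Od[OF _ vG] j n1(1) by (meson atLeastLessThan_iff le_trans less_imp_le)
              qed
              also have "\<dots> = 2 * (1/2)^n1 - 2 * (1/2)^n" using geom_sum_bound[of n1 n] 2 by simp
              also have "\<dots> \<le> 2 * (1/2)^n1" by simp
              finally show ?thesis .
            qed
          qed
          then show ?thesis unfolding eq using n1(2) by simp
        qed
      qed
    next
      case False
      obtain Mx N0 where MN: "open N0" "u0 \<in> N0" "N0 \<inter> W Mx = {}" using sep[OF False] by blast
      define F where "F = (\<lambda>x. \<Sum>n\<le>Mx. psi \<phi> n (range_map gm gi x) * fs n x)"
      have rc: "continuous_on UNIV (range_map gm gi)" by (rule range_map_cont[OF tg])
      have FCc: "F \<in> Cc" unfolding F_def
      proof (intro Cc_sum Cc_mult_cont fsCc)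
        fix n
        show "continuous_on UNIV (\<lambda>x. psi \<phi> n (range_map gm gi x))"
          using continuous_on_compose[OF rc continuous_on_subset[OF \<psi>cont]] by (simp add: o_def)
      qed simp
      show ?thesis
      proof (intro bexI exI conjI ballI)
        show "open N0" "u0 \<in> N0" using MN by auto
        show "F \<in> Cc" by (rule FCc)
        fix v assume v: "v \<in> N0 \<inter> unit_space gm gi"
        have vG: "v \<in> unit_space gm gi" using v by simp
        have vW: "v \<notin> W Mx" using v MN by blast
        have vu: "v \<noteq> u" using vW Wu by blast
        have "AE x in lam v. range_map gm gi x = v" by (rule lhs_fibre_AE[OF lhs vG])
        then have "AE x in lam v. \<eta> v x - F x = 0"
        proof (rule eventually_mono)
          fix x assume "range_map gm gi x = v"
          then show "\<eta> v x - F x = 0" unfolding F_def using \<eta>ext[OF vu Nf_le[OF vW]] by simp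
        qed
        then have "gauge_norm (lam v) \<Phi> (\<lambda>x. \<eta> v x - F x) = gauge_norm (lam v) \<Phi> (\<lambda>x. 0)"
          by (rule gauge_cong_AE)
        then show "gauge_norm (lam v) \<Phi> (\<lambda>x. \<eta> v x - F x) < \<epsilon>" using e by (simp add: gauge_zero[OF nf])
      qed
    qed
  qed
  have E0c: "\<forall>\<epsilon>>0. \<exists>K. compact K \<and> K \<subseteq> unit_space gm gi \<and>
        (\<forall>v \<in> unit_space gm gi - K. gauge_norm (lam v) \<Phi> (\<eta> v) < \<epsilon>)"
  proof (intro allI impI)
    fix \<epsilon> :: real assume e: "0 < \<epsilon>"
    show "\<exists>K. compact K \<and> K \<subseteq> unit_space gm gi \<and> (\<forall>v \<in> unit_space gm gi - K. gauge_norm (lam v) \<Phi> (\<eta> v) < \<epsilon>)"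
    proof (intro exI conjI ballI)
      show "compact (closure (W 0) \<inter> unit_space gm gi)"
        using compact_Int_closed[OF Wc unit_space_closed[OF tg]] .
      show "closure (W 0) \<inter> unit_space gm gi \<subseteq> unit_space gm gi" by blast
      fix v assume v: "v \<in> unit_space gm gi - closure (W 0) \<inter> unit_space gm gi"
      then have vW: "v \<notin> W 0" using closure_subset[of "W 0"] by blast
      then have vu: "v \<noteq> u" using Wu by blast
      have "Nf v = 0" using Nf_le[OF vW] by simp
      then have "\<eta> v = (\<lambda>x. 0)" using \<eta>v[OF vu] fs0 by simp
      then show "gauge_norm (lam v) \<Phi> (\<eta> v) < \<epsilon>" using e by (simp add: gauge_zero[OF nf])
    qed
  qed
  have inE0: "\<eta> \<in> E0 gm gi lam \<Phi>" unfolding E0_def using E0a E0b E0c by blast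
  have norm: "E0_norm gm gi lam \<Phi> \<eta> \<le> k"
    unfolding E0_norm_def
  proof (rule cSUP_least)
    show "unit_space gm gi \<noteq> {}" using u by blast
    fix v assume vG: "v \<in> unit_space gm gi"
    show "gauge_norm (lam v) \<Phi> (\<eta> v) \<le> k"
    proof (cases "v = u")
      case True then show ?thesis using gk \<eta>u by simp
    next
      case False
      show ?thesis unfolding \<eta>v[OF False]
      proof (rule gauge_convex_bound[OF nf finite_atMost])
        show "adm (lam v) \<Phi> (fs n)" for n by (rule fsadm[OF vG])
        show "0 \<le> psi \<phi> n v" for n by (rule \<psi>nn)
        show "(\<Sum>n\<le>Nf v. psi \<phi> n v) = 1" by (rule \<psi>1[OF False])
        fix n assume "n \<in> {..Nf v}" and nz: "psi \<phi> n v \<noteq> 0"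
        show "gauge_norm (lam v) \<Phi> (fs n) \<le> k"
        proof (cases "n = 0")
          case True then show ?thesis using k0 fs0 by (simp add: gauge_zero[OF nf])
        next
          case False
          then have "v \<in> W (n - 1)" using \<psi>ne[OF nz] by simp
          then have "v \<in> Ob (n - 1)" using WO by blast
          then have "gauge_norm (lam v) \<Phi> (fs (Suc (n - 1))) \<le> k" using Ok vG by blast
          then show ?thesis using False by simp
        qed
      qed
    qed
  qed
  show ?thesis using inE0 norm \<eta>u by (intro bexI[of _ \<eta>]) auto
qed



end
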